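(* Consider the algorithm described in the context, where $\psi$ can be truncated, and suppose it does not terminate after finitely many steps. Assume (A.1) $\psi$ is bounded from below; (A.2) whenever $g(x)\ne0$, there exist $r,\epsilon>0$ with $\|g(y)\|\ge\epsilon$ for all $y\in B_r(x)$; (B.1) there is $R>0$ with $\{x^k\}\subseteq B_R(0)$; (B.2) there is $\kappa_B>0$ with $\sup_k\|B^k\|\le\kappa_B$; (B.3) for every subsequence $\{k_\ell\}$ such that $\{x^{k_\ell}\}$ converges and $\alpha_{k_\ell}\to0$, $\psi(x^{k_\ell}+\alpha_{k_\ell}\bar s^{k_\ell})-\psi(x^{k_\ell})-\alpha_{k_\ell}\psi'(x^{k_\ell};\bar s^{k_\ell})=o(\alpha_{k_\ell})$ as $\ell\to\infty$; (B.4) for every $\epsilon>0$ there is $\epsilon'>0$ such that $\Gamma(x^k)\ge\epsilon$ implies $\Gamma(x^k,\bar s^k)\ge\epsilon'$. Then for any symmetric positive definite matrix $\Lambda$, $\lim_{k\to\infty}\|F^{\Lambda}_{\mathrm{nat}}(x^k)\|=0$.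
   Context: Problem: minimize $\psi=f+\varphi$ where $f:\mathbb{R}^n\to\mathbb{R}$ is continuously differentiable and $\varphi:\mathbb{R}^n\to\mathbb{R}$ is convex. Natural residual: $F^{\Lambda}_{\mathrm{nat}}(x)=x-\mathrm{prox}^{\Lambda}_{\varphi}(x-\Lambda^{-1}\nabla f(x))$ with $\mathrm{prox}^{\Lambda}_{\varphi}(z)=\arg\min_y\varphi(y)+\frac12(y-z)^T\Lambda(y-z)$. Notation: $\|\cdot\|$ Euclidean norm (Frobenius for matrices), $B_r(x)$ open ball, $\bar v=v/\|v\|$, $\psi'(x;d)$ directional derivative, $\partial\psi(x)=\nabla f(x)+\partial\varphi(x)$; $x$ is stationary if $0\in\partial\psi(x)$. Pseudo-gradient: $g(x)=u(x)d(x)$ where, for non-stationary $x$, $\|d(x)\|=1$, $\psi'(x;d(x))<0$, $u(x)\in[\psi'(x;d(x)),0)$, and for stationary $x$, $d(x)=0$, $u(x)=0$. Safeguards: for $\|d\|=1$, $\Gamma_{\max}(x,d)=\sup\{T>0: t\mapsto\psi(x+td)\text{ is } C^1\text{ on }(0,T)\}$, $\Gamma(x)=\inf_{\|d\|=1}\Gamma_{\max}(x,d)$; a stepsize safeguard $(x,d)\mapsto\Gamma(x,d)\in(0,\infty]$ is fixed. Truncation: $\psi$ can be truncated with data $\mathbb{R}^n=S_0\supset\cdots\supset S_m$, $\delta\in(0,\infty]$, $\kappa>0$, $T:\mathbb{R}^n\times(0,\delta]\to\mathbb{R}^n$ meaning (i) $\Gamma(x)\ge\delta$ on $S_m$; (ii)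 for $a\in(0,\delta]$, $x\in S_i\setminus S_{i+1}$, $i<m$: if $\Gamma(x)\ge a$ then $T(x,a)=x$, else $T(x,a)\in S_{i+1}$, $\Gamma(T(x,a))\ge a$, $\|T(x,a)-x\|\le\kappa a$. Put $S_{m+1}=\emptyset$. Algorithm: parameters $0<\eta<\eta_1<\eta_2<1$, $0<r_1<1<r_2$, $\Delta_{\max}>0$, $\gamma_1,\gamma_2>0$, a positive strictly decreasing summable sequence $(\epsilon_s)$ with $\epsilon_s\le\delta$, a nonincreasing $\ell:(0,\infty)\to[0,\frac12]$ with $\ell(\Delta)\to0$ as $\Delta\to0^+$; start $x^0$, $\Delta_0>0$, counters $c_0=\dots=c_m=0$. Iteration $k$: $g^k=g(x^k)$; stop if $g^k=0$. Choose $B^k\in\mathbb{R}^{n\times n}$, model $m_k(s)=\psi(x^k)+\langle g^k,s\rangle+\frac12\langle s,B^ks\rangle$, Cauchy point $s^k_C=-\alpha^C_kg^k$ with $\alpha^C_k\in\arg\min_{0\le t\le\Delta_k/\|g^k\|}m_k(-tg^k)$. Choose $s^k$, $\|s^k\|\le\Delta_k$, with $m_k(0)-m_k(s^k)\ge\frac{\gamma_1}{2}\|g^k\|\min\{\Delta_k,\gamma_2\|g^k\|\}$ and $m_k(0)-m_k(s^k)\ge(1-\ell(\|s^k\|))(m_k(0)-m_k(s^k_C))$. Let $\rho^1_k=\frac{\psi(x^k)-\psi(x^k+s^k)}{m_k(0)-m_k(s^k)}$. If $\rho^1_k\ge\eta_1$: $\tilde x^k=x^k+s^k$, $\Delta_{k+1}=\min\{\Delta_{\max},r_2\Delta_k\}$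 if $\rho^1_k>\eta_2$ and $\Delta_{k+1}=\Delta_k$ otherwise. Stepsize computation (performed for the analysis in every iteration, used by the algorithm when $\rho^1_k<\eta_1$): $\alpha_k=\min\{\Gamma(x^k,\bar s^k),\|s^k\|\}$; if $m_k(0)-m_k(\alpha_k\bar s^k)<\frac{\alpha_k}{2\|s^k\|}(m_k(0)-m_k(s^k))$, replace $s^k$ by $s^k_C$ and $\alpha_k=\min\{\Gamma(x^k,\bar s^k_C),\|s^k_C\|\}$; $\rho^2_k=\frac{\psi(x^k)-\psi(x^k+\alpha_k\bar s^k)}{m_k(0)-m_k(\alpha_k\bar s^k)}$. If $\rho^1_k<\eta_1$: $\Delta_{k+1}=r_1\Delta_k$ if $\rho^2_k<\eta_1$, $=\min\{\Delta_{\max},r_2\Delta_k\}$ if $\rho^2_k>\eta_2$, $=\Delta_k$ otherwise; $\tilde x^k=x^k+\alpha_k\bar s^k$ if $\rho^2_k\ge\eta$ and $\tilde x^k=x^k$ otherwise. Truncation step: set $\tilde x=\tilde x^k$ and repeat {find $i$ with $\tilde x\in S_i\setminus S_{i+1}$; if $\Gamma(\tilde x)<\epsilon_{c_i}$ set $\tilde x\leftarrow T(\tilde x,\epsilon_{c_i})$, $c_i\leftarrow c_i+1$; else stop}; $x^{k+1}=\tilde x$. Here $\alpha_k,\bar s^k$ denote the quantities of the stepsize computation. *)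

theory Defs
  imports "HOL-Analysis.Analysis" "HOL-Library.Landau_Symbols"
begin

definition dir_deriv :: "('a::real_normed_vector \<Rightarrow> real) \<Rightarrow> 'a \<Rightarrow> 'a \<Rightarrow> real" where
  "dir_deriv h x d = Lim (at_right 0) (\<lambda>t. (h (x + t *\<^sub>R d) - h x) / t)"

definition subdiff :: "('a::real_inner \<Rightarrow> real) \<Rightarrow> 'a \<Rightarrow> 'a set" where
  "subdiff phi x = {v. \<forall>y. phi y \<ge> phi x + v \<bullet> (y - x)}"

definition stationary :: "('a::real_inner \<Rightarrow> 'a) \<Rightarrow> ('a \<Rightarrow> real) \<Rightarrow> 'a \<Rightarrow> bool" where
  "stationary gradf phi x \<longleftrightarrow> (0::'a) \<in> (\<lambda>v. gradf x + v) ` subdiff phi x"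

definition C1_on :: "real set \<Rightarrow> (real \<Rightarrow> real) \<Rightarrow> bool" where
  "C1_on S h \<longleftrightarrow> (\<exists>h'. (\<forall>t\<in>S. (h has_real_derivative h' t) (at t)) \<and> continuous_on S h')"

definition Gamma_max :: "('a::real_normed_vector \<Rightarrow> real) \<Rightarrow> 'a \<Rightarrow> 'a \<Rightarrow> ereal" where
  "Gamma_max h x d = Sup {ereal T | T. T > 0 \<and> C1_on {0<..<T} (\<lambda>t. h (x + t *\<^sub>R d))}"

definition Gamma_min :: "('a::real_normed_vector \<Rightarrow> real) \<Rightarrow> 'a \<Rightarrow> ereal" where
  "Gamma_min h x = (INF d\<in>{d. norm d = 1}. Gamma_max h x d)"

definition lvl :: "(nat \<Rightarrow> 'a set) \<Rightarrow> nat \<Rightarrow> nat \<Rightarrow> 'a set" where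
  "lvl S m i = (if i \<le> m then S i else {})"

text \<open>The (terminating) truncation loop: trunc_loop G S m T eps c x c' x' means that,
  started from point x with counters c, the loop stops with point x' and counters c'.\<close>
inductive trunc_loop :: "('a \<Rightarrow> ereal) \<Rightarrow> (nat \<Rightarrow> 'a set) \<Rightarrow> nat \<Rightarrow> ('a \<Rightarrow> real \<Rightarrow> 'a)
    \<Rightarrow> (nat \<Rightarrow> real) \<Rightarrow> (nat \<Rightarrow> nat) \<Rightarrow> 'a \<Rightarrow> (nat \<Rightarrow> nat) \<Rightarrow> 'a \<Rightarrow> bool"
  for G S m T eps where
  stop: "x \<in> lvl S m i - lvl S m (Suc i) \<Longrightarrow> G x \<ge> ereal (eps (c i))
          \<Longrightarrow> trunc_loop G S m T eps c x c x"
| step: "x \<in> lvl S m i - lvl S m (Suc i) \<Longrightarrow> G x < ereal (eps (c i))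
          \<Longrightarrow> trunc_loop G S m T eps (c(i := Suc (c i))) (T x (eps (c i))) c' x'
          \<Longrightarrow> trunc_loop G S m T eps c x c' x'"

definition tr_model :: "real \<Rightarrow> real^'n \<Rightarrow> real^'n^'n \<Rightarrow> real^'n \<Rightarrow> real" where
  "tr_model p g B s = p + g \<bullet> s + (1/2) * (s \<bullet> (B *v s))"

definition safe_step :: "('a::real_normed_vector \<Rightarrow> 'a \<Rightarrow> ereal) \<Rightarrow> 'a \<Rightarrow> 'a \<Rightarrow> real" where
  "safe_step Gs x v = real_of_ereal (min (Gs x (sgn v)) (ereal (norm v)))"

definition sym_posdef :: "real^'n^'n \<Rightarrow> bool" where
  "sym_posdef L \<longleftrightarrow> transpose L = L \<and> (\<forall>v. v \<noteq> 0 \<longrightarrow> v \<bullet> (L *v v) > 0)"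

definition prox :: "real^'n^'n \<Rightarrow> (real^'n \<Rightarrow> real) \<Rightarrow> real^'n \<Rightarrow> real^'n" where
  "prox L phi z = (THE y. \<forall>w. phi y + (1/2) * ((y - z) \<bullet> (L *v (y - z)))
                            \<le> phi w + (1/2) * ((w - z) \<bullet> (L *v (w - z))))"

definition Fnat :: "real^'n^'n \<Rightarrow> (real^'n \<Rightarrow> real^'n) \<Rightarrow> (real^'n \<Rightarrow> real) \<Rightarrow> real^'n \<Rightarrow> real^'n" where
  "Fnat L gradf phi x = x - prox L phi (x - matrix_inv L *v gradf x)"

end

theory Submission
  imports Defs
begin

lemma matvec_bound:
  fixes B :: "real^'n^'n"
  shows "norm (B *v h) \<le> (real CARD('n) * real CARD('n) * norm B) * norm h"
proof -
  have "\<And>i j. \<bar>B$i$j\<bar> \<le> norm B"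
    by (rule order_trans[OF component_le_norm_cart Finite_Cartesian_Product.norm_nth_le])
  hence "onorm ((*v) B) \<le> real CARD('n) * real CARD('n) * norm B"
    by (rule onorm_le_matrix_component)
  moreover have "norm (B *v h) \<le> onorm ((*v) B) * norm h"
    by (rule onorm[OF matrix_vector_mul_bounded_linear])
  ultimately show ?thesis by (meson mult_right_mono norm_ge_zero order_trans)
qed

lemma quad_bound:
  fixes B :: "real^'n^'n"
  shows "\<bar>h \<bullet> (B *v h)\<bar> \<le> (real CARD('n) * real CARD('n) * norm B) * (norm h)^2"
proof -
  have "\<bar>h \<bullet> (B *v h)\<bar> \<le> norm h * norm (B *v h)" by (rule Cauchy_Schwarz_ineq2)
  also have "\<dots> \<le> norm h * ((real CARD('n) * real CARD('n) * norm B) * norm h)"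
    by (rule mult_left_mono[OF matvec_bound]) simp
  finally show ?thesis by (simp add: power2_eq_square algebra_simps)
qed

lemma convex_lipschitz_cball:
  fixes phi :: "'a::euclidean_space \<Rightarrow> real"
  assumes cv: "convex_on UNIV phi"
  shows "\<exists>L\<ge>0. \<forall>y\<in>cball 0 R. \<forall>z\<in>cball 0 R. \<bar>phi y - phi z\<bar> \<le> L * norm (y - z)"
proof -
  have cont: "continuous_on UNIV phi" by (rule convex_on_continuous[OF open_UNIV cv])
  have "compact (cball (0::'a) (R+1))" by simp
  then have "bounded (phi ` cball 0 (R+1))"
    by (meson compact_continuous_image compact_imp_bounded continuous_on_subset cont subset_UNIV)
  then obtain M where M: "\<forall>y\<in>cball 0 (R+1). \<bar>phi y\<bar> \<le> M"
    by (auto simp: bounded_iff)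
  have one: "phi z - phi y \<le> 2 * M * norm (y - z)" if y: "y \<in> cball 0 R" and z: "z \<in> cball 0 R" for y z
  proof (cases "y = z")
    case True then show ?thesis by simp
  next
    case False
    define n where "n = norm (z - y)"
    have n: "n > 0" using False by (simp add: n_def)
    define w where "w = z + (1/n) *\<^sub>R (z - y)"
    define l where "l = n / (n + 1)"
    have l: "0 \<le> l" "l \<le> 1" using n by (auto simp: l_def)
    have "norm w \<le> norm z + norm ((1/n) *\<^sub>R (z - y))" unfolding w_def by (rule norm_triangle_ineq)
    also have "norm ((1/n) *\<^sub>R (z - y)) = 1" using n by (simp add: n_def)
    finally have w: "w \<in> cball 0 (R+1)" using z by auto
    have yR: "y \<in> cball 0 (R+1)" using y by auto
    have "(1 - l) *\<^sub>R y + l *\<^sub>R w = y + l *\<^sub>R (w - y)" by (simp add: algebra_simps)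
    also have "l *\<^sub>R (w - y) = (l * (1 + 1/n)) *\<^sub>R (z - y)"
      unfolding w_def by (simp add: algebra_simps)
    also have "l * (1 + 1/n) = 1" using n by (simp add: l_def field_simps; smt (verit) mult_pos_pos)
    finally have zeq: "(1 - l) *\<^sub>R y + l *\<^sub>R w = z" by simp
    have "phi z \<le> (1 - l) * phi y + l * phi w"
      using convex_onD[OF cv l(1) l(2), of y w] zeq by simp
    hence "phi z - phi y \<le> l * (phi w - phi y)" by (simp add: algebra_simps)
    also have "\<dots> \<le> l * (2 * M)"
      using M[rule_format, OF w] M[rule_format, OF yR] l by (intro mult_left_mono) (auto simp: abs_le_iff)
    also have "l \<le> n" using n by (simp add: l_def field_simps)
    hence "l * (2 * M) \<le> n * (2 * M)"
      using M yR by (intro mult_right_mono) (auto simp: abs_le_iff)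
    finally show ?thesis by (simp add: n_def norm_minus_commute mult_ac)
  qed
  show ?thesis
  proof (intro exI[of _ "2*max M 0"] conjI ballI)
    fix y z :: 'a assume "y \<in> cball 0 R" "z \<in> cball 0 R"
    with one have "phi z - phi y \<le> 2*M*norm(y-z)" "phi y - phi z \<le> 2*M*norm(z-y)" by auto
    moreover have "2*M*norm(y-z) \<le> 2*max M 0*norm(y-z)" by (intro mult_right_mono) auto
    ultimately show "\<bar>phi y - phi z\<bar> \<le> 2*max M 0 * norm (y-z)" by (auto simp: norm_minus_commute)
  qed simp
qed

lemma grad_lipschitz_cball:
  fixes f :: "real^'n \<Rightarrow> real"
  assumes fd: "\<forall>y. (f has_derivative (\<lambda>h. gradf y \<bullet> h)) (at y)"
    and gc: "continuous_on UNIV gradf"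
  shows "\<exists>L\<ge>0. \<forall>y\<in>cball 0 R. \<forall>z\<in>cball 0 R. \<bar>f y - f z\<bar> \<le> L * norm (y - z)"
proof -
  have "compact (cball (0::real^'n) R)" by simp
  then have "bounded (gradf ` cball 0 R)"
    by (meson compact_continuous_image compact_imp_bounded continuous_on_subset gc subset_UNIV)
  then obtain G where G: "\<forall>y\<in>cball 0 R. norm (gradf y) \<le> G"
    by (auto simp: bounded_iff)
  have "norm (f y - f z) \<le> max G 0 * norm (y - z)" if "y \<in> cball 0 R" "z \<in> cball 0 R" for y z
  proof (rule differentiable_bound[of "cball 0 R" f "\<lambda>x h. gradf x \<bullet> h"])
    show "convex (cball (0::real^'n) R)" by simp
    show "(f has_derivative (\<lambda>h. gradf x \<bullet> h)) (at x within cball 0 R)" for x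
      using fd has_derivative_at_withinI by blast
    show "onorm (\<lambda>h. gradf x \<bullet> h) \<le> max G 0" if "x \<in> cball 0 R" for x
    proof (rule onorm_le)
      fix h
      have "norm (gradf x \<bullet> h) \<le> norm (gradf x) * norm h" by (simp add: Cauchy_Schwarz_ineq2)
      also have "\<dots> \<le> max G 0 * norm h" using G that by (intro mult_right_mono) (auto intro: max.coboundedI1)
      finally show "norm (gradf x \<bullet> h) \<le> max G 0 * norm h" .
    qed
  qed (use that in auto)
  then show ?thesis by (intro exI[of _ "max G 0"]) auto
qed

lemma convex_dd_exists:
  fixes phi :: "'a::real_normed_vector \<Rightarrow> real"
  assumes cv: "convex_on UNIV phi"
  shows "\<exists>D. ((\<lambda>t. (phi (x + t *\<^sub>R v) - phi x) / t) \<longlongrightarrow> D) (at_right 0)"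
proof -
  define Q where "Q = (\<lambda>t. (phi (x + t *\<^sub>R v) - phi x) / t)"
  have mono: "Q s \<le> Q t" if "0 < s" "s \<le> t" for s t
  proof -
    have l: "0 \<le> s/t" "s/t \<le> 1" using that by auto
    have "x + s *\<^sub>R v = (1 - s/t) *\<^sub>R x + (s/t) *\<^sub>R (x + t *\<^sub>R v)"
      using that by (simp add: algebra_simps)
    hence "phi (x + s *\<^sub>R v) \<le> (1 - s/t) * phi x + (s/t) * phi (x + t *\<^sub>R v)"
      using convex_onD[OF cv l] by simp
    hence "phi (x + s *\<^sub>R v) - phi x \<le> (s/t) * (phi (x + t *\<^sub>R v) - phi x)"
      by (simp add: algebra_simps)
    hence "(phi (x + s *\<^sub>R v) - phi x) / s \<le> (phi (x + t *\<^sub>R v) - phi x) / t"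
      using that by (simp add: field_simps)
    thus ?thesis by (simp add: Q_def)
  qed
  have low: "phi x - phi (x - v) \<le> Q t" if "0 < t" for t
  proof -
    have l: "0 \<le> t/(1+t)" "t/(1+t) \<le> 1" using that by auto
    have "(1 - t/(1+t)) *\<^sub>R (x + t *\<^sub>R v) + (t/(1+t)) *\<^sub>R (x - v)
       = ((1 - t/(1+t)) + t/(1+t)) *\<^sub>R x + ((1 - t/(1+t))*t - t/(1+t)) *\<^sub>R v"
      by (simp add: algebra_simps)
    also have "(1 - t/(1+t)) + t/(1+t) = 1" by simp
    also have "(1 - t/(1+t))*t - t/(1+t) = 0" using that by (simp add: field_simps)
    finally have e: "(1 - t/(1+t)) *\<^sub>R (x + t *\<^sub>R v) + (t/(1+t)) *\<^sub>R (x - v) = x" by simp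
    have c: "phi ((1 - t/(1+t)) *\<^sub>R (x + t *\<^sub>R v) + (t/(1+t)) *\<^sub>R (x - v))
       \<le> (1 - t/(1+t)) * phi (x + t *\<^sub>R v) + (t/(1+t)) * phi (x - v)"
      by (rule convex_onD[OF cv l]) auto
    hence "phi x \<le> (1 - t/(1+t)) * phi (x + t *\<^sub>R v) + (t/(1+t)) * phi (x - v)"
      unfolding e .
    also have "(1 - t/(1+t)) * phi (x + t *\<^sub>R v) + (t/(1+t)) * phi (x - v)
       = (phi (x + t *\<^sub>R v) + t * phi (x - v)) / (1+t)"
    proof -
      have h1: "1 - t/(1+t) = 1/(1+t)" using that by (simp add: field_simps)
      show ?thesis unfolding h1 by (simp add: add_divide_distrib)
    qed
    finally have "(1+t) * phi x \<le> phi (x + t *\<^sub>R v) + t * phi (x - v)"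
      using that by (simp add: pos_le_divide_eq mult.commute)
    thus ?thesis using that by (simp add: Q_def field_simps)
  qed
  define D where "D = Inf (Q ` {0<..1})"
  have bdd: "bdd_below (Q ` {0<..1})" using low by (auto intro!: bdd_belowI)
  have DQ: "D \<le> Q t" if "0 < t" "t \<le> 1" for t
    unfolding D_def using bdd that by (intro cInf_lower) auto
  have "(Q \<longlongrightarrow> D) (at_right 0)"
  proof (rule tendstoI)
    fix e :: real assume e: "e > 0"
    have "\<exists>y\<in>Q ` {0<..1}. y < D + e"
      unfolding D_def using e by (intro cInf_lessD) auto
    then obtain t0 where t0: "0 < t0" "t0 \<le> 1" "Q t0 < D + e" by auto
    show "\<forall>\<^sub>F t in at_right 0. dist (Q t) D < e"
      using eventually_at_right_real[OF t0(1)]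
    proof (rule eventually_mono)
      fix t assume "t \<in> {0<..<t0}"
      hence "D \<le> Q t" "Q t \<le> Q t0" using DQ mono t0 by auto
      thus "dist (Q t) D < e" using t0 by (simp add: dist_real_def)
    qed
  qed
  thus ?thesis unfolding Q_def by blast
qed


lemma sym_inner:
  fixes L :: "real^'n^'n"
  assumes "transpose L = L"
  shows "h \<bullet> (L *v k) = k \<bullet> (L *v h)"
proof -
  have "h \<bullet> (L *v k) = (h v* L) \<bullet> k" by (simp add: dot_lmul_matrix)
  also have "h v* L = transpose L *v h" by simp
  finally show ?thesis using assms by (simp add: inner_commute)
qed

lemma quad_expand:
  fixes L :: "real^'n^'n"
  assumes "transpose L = L"
  shows "(a + t *\<^sub>R h) \<bullet> (L *v (a + t *\<^sub>R h)) = a \<bullet> (L *v a) + 2 * t * (h \<bullet> (L *v a)) + t^2 * (h \<bullet> (L *v h))"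
proof -
  have s: "a \<bullet> (L *v h) = h \<bullet> (L *v a)" by (rule sym_inner[OF assms])
  have "(a + t *\<^sub>R h) \<bullet> (L *v (a + t *\<^sub>R h)) = a \<bullet> (L *v a) + t * (a \<bullet> (L *v h)) + t * (h \<bullet> (L *v a)) + t * t * (h \<bullet> (L *v h))"
    by (simp add: matrix_vector_right_distrib matrix_vector_mult_scaleR inner_add_left inner_add_right ring_distribs)
  then show ?thesis unfolding s by (simp add: power2_eq_square)
qed

lemma posdef_lower:
  fixes L :: "real^'n^'n"
  assumes "sym_posdef L"
  shows "\<exists>lam>0. \<forall>v. lam * (norm v)^2 \<le> v \<bullet> (L *v v)"
proof -
  have pd: "\<And>v. v \<noteq> 0 \<Longrightarrow> v \<bullet> (L *v v) > 0" using assms by (auto simp: sym_posdef_def)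
  have "compact (sphere (0::real^'n) 1)" by simp
  moreover have "sphere (0::real^'n) 1 \<noteq> {}" by simp
  moreover have "continuous_on (sphere 0 1) (\<lambda>v::real^'n. v \<bullet> (L *v v))"
    by (intro continuous_intros)
  ultimately obtain u where u: "u \<in> sphere 0 1" "\<forall>y\<in>sphere 0 1. u \<bullet> (L *v u) \<le> y \<bullet> (L *v y)"
    using continuous_attains_inf by blast
  define lam where "lam = u \<bullet> (L *v u)"
  have "u \<noteq> 0" using u(1) by auto
  then have lam: "lam > 0" using pd by (auto simp: lam_def)
  have "lam * (norm v)^2 \<le> v \<bullet> (L *v v)" for v
  proof (cases "v = 0")
    case True then show ?thesis by simp
  next
    case False
    define w where "w = (1 / norm v) *\<^sub>R v"
    have w: "w \<in> sphere 0 1" using False by (simp add: w_def)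
    have v: "v = norm v *\<^sub>R w" using False by (simp add: w_def)
    have "v \<bullet> (L *v v) = (norm v)^2 * (w \<bullet> (L *v w))"
      by (subst (1 2) v) (simp add: matrix_vector_mult_scaleR power2_eq_square)
    moreover have "lam \<le> w \<bullet> (L *v w)" using u w by (auto simp: lam_def)
    moreover have "lam * (norm v)^2 \<le> (w \<bullet> (L *v w)) * (norm v)^2"
      using \<open>lam \<le> w \<bullet> (L *v w)\<close> by (rule mult_right_mono) simp
    ultimately show ?thesis by (simp add: mult.commute)
  qed
  with lam show ?thesis by blast
qed

lemma posdef_invertible:
  fixes L :: "real^'n^'n"
  assumes "sym_posdef L"
  shows "L ** matrix_inv L = mat 1"
proof -
  have pd: "\<And>v. v \<noteq> 0 \<Longrightarrow> v \<bullet> (L *v v) > 0" using assms by (auto simp: sym_posdef_def)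
  have "inj ((*v) L)"
  proof (rule injI)
    fix a b assume "L *v a = L *v b"
    hence "L *v (a - b) = 0" by (simp add: matrix_vector_mult_diff_distrib)
    hence "(a - b) \<bullet> (L *v (a - b)) = 0" by simp
    thus "a = b" using pd[of "a - b"] by (cases "a = b") auto
  qed
  then have "invertible L"
    using matrix_left_invertible_injective invertible_left_inverse by blast
  then have "\<exists>A'. L ** A' = mat 1 \<and> A' ** L = mat 1" by (simp add: invertible_def)
  then show ?thesis unfolding matrix_inv_def by (rule someI_ex[THEN conjunct1])
qed

definition qf :: "real^'n^'n \<Rightarrow> (real^'n \<Rightarrow> real) \<Rightarrow> real^'n \<Rightarrow> real^'n \<Rightarrow> real" where
  "qf L phi z y = phi y + (1/2) * ((y - z) \<bullet> (L *v (y - z)))"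

lemma convex_linear_lower:
  fixes phi :: "'a::euclidean_space \<Rightarrow> real"
  assumes cv: "convex_on UNIV phi"
  shows "\<exists>K\<ge>0. \<forall>y. phi y \<ge> phi 0 - K * norm y"
proof -
  obtain K where K: "K \<ge> 0" "\<forall>y\<in>cball 0 1. \<forall>z\<in>cball 0 1. \<bar>phi y - phi z\<bar> \<le> K * norm (y - z)"
    using convex_lipschitz_cball[OF cv, of 1] by blast
  have "phi y \<ge> phi 0 - K * norm y" for y
  proof (cases "norm y \<le> 1")
    case True
    then have "\<bar>phi y - phi 0\<bar> \<le> K * norm (y - 0)" using K(2)[rule_format, of y 0] by simp
    then show ?thesis by auto
  next
    case False
    define n where "n = norm y"
    have n: "n > 1" using False by (simp add: n_def)
    define u where "u = (1/n) *\<^sub>R y"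
    have "y \<noteq> 0" using n by (auto simp: n_def)
    then have u: "norm u = 1" by (simp add: u_def n_def)
    have l: "0 \<le> 1/n" "1/n \<le> 1" using n by auto
    have "(1 - 1/n) *\<^sub>R 0 + (1/n) *\<^sub>R y = u" by (simp add: u_def)
    then have "phi u \<le> (1 - 1/n) * phi 0 + (1/n) * phi y"
      using convex_onD[OF cv l, of 0 y] by simp
    moreover have "\<bar>phi u - phi 0\<bar> \<le> K * norm (u - 0)" using K(2)[rule_format, of u 0] u by simp
    ultimately have "phi 0 - K \<le> (1 - 1/n) * phi 0 + (1/n) * phi y" using u by auto
    then have "n * (phi 0 - K) \<le> n * ((1 - 1/n) * phi 0 + (1/n) * phi y)"
      using n by (intro mult_left_mono) auto
    then have "n * (phi 0 - K) \<le> (n - 1) * phi 0 + phi y" using n by (simp add: algebra_simps)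
    then show ?thesis by (simp add: n_def algebra_simps)
  qed
  with K show ?thesis by blast
qed

lemma qf_min_exists:
  fixes L :: "real^'n^'n"
  assumes L: "sym_posdef L" and cv: "convex_on UNIV phi"
  shows "\<exists>p. \<forall>w. qf L phi z p \<le> qf L phi z w"
proof -
  obtain lam where lam: "lam > 0" "\<forall>v. lam * (norm v)^2 \<le> v \<bullet> (L *v v)"
    using posdef_lower[OF L] by blast
  obtain K where K: "K \<ge> 0" "\<forall>y. phi y \<ge> phi 0 - K * norm y"
    using convex_linear_lower[OF cv] by blast
  define C where "C = qf L phi z z - phi 0 + K * norm z"
  have C: "C \<ge> 0" using K(2)[rule_format, of z] by (simp add: C_def qf_def)
  define rho where "rho = (2*K + 2*C)/lam + 1"
  have rho: "rho \<ge> 1" using lam K C by (simp add: rho_def)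
  have far: "qf L phi z w > qf L phi z z" if w: "norm (w - z) > rho" for w
  proof -
    define r where "r = norm (w - z)"
    have r: "r > rho" using w by (simp add: r_def)
    have "phi w \<ge> phi 0 - K * norm w" using K by auto
    moreover have "norm w \<le> norm z + r" unfolding r_def by (metis norm_triangle_sub add.commute)
    ultimately have pw: "phi w \<ge> phi 0 - K * norm z - K * r" using K(1)
      by (smt (verit) mult_left_mono distrib_left)
    have qw: "(w - z) \<bullet> (L *v (w - z)) \<ge> lam * r^2" using lam by (simp add: r_def)
    have "lam * r \<ge> 2*K + 2*C + lam" using r lam
      by (simp add: rho_def field_simps)
    then have "lam * r * r \<ge> (2*K + 2*C + lam) * r" using r rho by (intro mult_right_mono) auto
    then have "lam/2 * r^2 - K * r \<ge> (C + lam/2) * r" by (simp add: power2_eq_square algebra_simps)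
    moreover have "(C + lam/2) * r > C"
    proof -
      have "(C + lam/2) * 1 \<le> (C + lam/2) * r" using r rho C lam by (intro mult_left_mono) auto
      then show ?thesis using lam by simp
    qed
    ultimately have "lam/2 * r^2 - K * r > C" by simp
    moreover have "lam/2 * r^2 = 1/2 * (lam * r^2)" by simp
    moreover have "qf L phi z z = phi z" by (simp add: qf_def)
    moreover have "qf L phi z w = phi w + 1/2 * ((w - z) \<bullet> (L *v (w - z)))" by (simp add: qf_def)
    ultimately show ?thesis using pw qw unfolding C_def by linarith
  qed
  have "compact (cball z rho)" by simp
  moreover have "cball z rho \<noteq> {}" using rho by simp
  moreover have "continuous_on (cball z rho) (qf L phi z)"
    unfolding qf_def matrix_vector_mult_diff_distrib
    by (intro continuous_intros continuous_on_subset[OF convex_on_continuous[OF open_UNIV cv]]) auto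
  ultimately obtain p where p: "p \<in> cball z rho" "\<forall>y\<in>cball z rho. qf L phi z p \<le> qf L phi z y"
    using continuous_attains_inf[of "cball z rho" "qf L phi z"] by auto
  have "qf L phi z p \<le> qf L phi z w" for w
  proof (cases "w \<in> cball z rho")
    case True then show ?thesis using p by auto
  next
    case False
    then have "qf L phi z w > qf L phi z z" using far by (simp add: dist_norm norm_minus_commute)
    moreover have "qf L phi z p \<le> qf L phi z z" using p rho by auto
    ultimately show ?thesis by simp
  qed
  then show ?thesis by blast
qed


lemma small_t_nonneg:
  fixes A c :: real
  assumes "c \<ge> 0" "\<forall>t. 0 < t \<and> t \<le> 1 \<longrightarrow> 0 \<le> A + t * c"
  shows "0 \<le> A"
proof (rule ccontr)
  assume A: "\<not> 0 \<le> A"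
  define t where "t = min 1 (- A / (2 * (c + 1)))"
  have "- A / (2 * (c + 1)) > 0" using A assms(1) by (intro divide_pos_pos) auto
  then have t: "0 < t" "t \<le> 1" by (auto simp: t_def)
  have "t * c \<le> (- A / (2 * (c + 1))) * c" using assms(1) by (intro mult_right_mono) (auto simp: t_def)
  also have "\<dots> = (- A) * (c / (2 * (c + 1)))" by simp
  also have "\<dots> \<le> (- A) * (1/2)" using A assms(1) by (intro mult_left_mono) (auto simp: field_simps)
  also have "\<dots> < - A" using A by simp
  finally have "A + t * c < 0" by simp
  with assms(2) t show False by auto
qed

lemma qf_min_vi:
  fixes L :: "real^'n^'n"
  assumes L: "sym_posdef L" and cv: "convex_on UNIV phi"
    and p: "\<forall>w. qf L phi z p \<le> qf L phi z w"
  shows "phi w - phi p + (w - p) \<bullet> (L *v (p - z)) \<ge> 0"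
proof -
  have sym: "transpose L = L" using L by (simp add: sym_posdef_def)
  have pd: "\<And>v. v \<bullet> (L *v v) \<ge> 0" using L unfolding sym_posdef_def
    by (metis inner_zero_left matrix_vector_mult_0_right order_less_imp_le order_refl)
  define h where "h = w - p"
  define A where "A = phi w - phi p + h \<bullet> (L *v (p - z))"
  define c where "c = (1/2) * (h \<bullet> (L *v h))"
  have "0 \<le> A + t * c" if t: "0 < t" "t \<le> 1" for t
  proof -
    have cvx: "phi ((1 - t) *\<^sub>R p + t *\<^sub>R w) \<le> (1 - t) * phi p + t * phi w"
      using convex_onD[OF cv, of t p w] t by simp
    have yt: "(1 - t) *\<^sub>R p + t *\<^sub>R w = p + t *\<^sub>R h" by (simp add: h_def algebra_simps)
    have quad: "(p + t *\<^sub>R h - z) \<bullet> (L *v (p + t *\<^sub>R h - z))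
       = (p - z) \<bullet> (L *v (p - z)) + 2 * t * (h \<bullet> (L *v (p - z))) + t^2 * (h \<bullet> (L *v h))"
    proof -
      have e: "p + t *\<^sub>R h - z = (p - z) + t *\<^sub>R h" by simp
      show ?thesis unfolding e by (rule quad_expand[OF sym])
    qed
    have "qf L phi z p \<le> qf L phi z (p + t *\<^sub>R h)" using p by blast
    then have "phi p + 1/2 * ((p - z) \<bullet> (L *v (p - z))) \<le> phi (p + t *\<^sub>R h) + 1/2 * ((p + t *\<^sub>R h - z) \<bullet> (L *v (p + t *\<^sub>R h - z)))"
      by (simp add: qf_def)
    then have i1: "phi p + 1/2 * ((p - z) \<bullet> (L *v (p - z))) \<le> phi (p + t *\<^sub>R h) + 1/2 * ((p - z) \<bullet> (L *v (p - z)) + 2 * t * (h \<bullet> (L *v (p - z))) + t^2 * (h \<bullet> (L *v h)))"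
      unfolding quad .
    have i2: "phi (p + t *\<^sub>R h) \<le> (1 - t) * phi p + t * phi w" using cvx unfolding yt .
    have e1: "(1 - t) * phi p + t * phi w = phi p + t * (phi w - phi p)" by (simp add: algebra_simps)
    have e2: "t^2 * c = 1/2 * (t^2 * (h \<bullet> (L *v h)))" by (simp add: c_def)
    have e3: "1/2 * ((p - z) \<bullet> (L *v (p - z)) + 2 * t * (h \<bullet> (L *v (p - z))) + t^2 * (h \<bullet> (L *v h)))
       = 1/2 * ((p - z) \<bullet> (L *v (p - z))) + t * (h \<bullet> (L *v (p - z))) + 1/2 * (t^2 * (h \<bullet> (L *v h)))"
      by (simp add: algebra_simps)
    have "0 \<le> t * (phi w - phi p) + t * (h \<bullet> (L *v (p - z))) + t^2 * c"
      using i1 i2 e1 e2 e3 by linarith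
    moreover have "t * (A + t * c) = t * (phi w - phi p) + t * (h \<bullet> (L *v (p - z))) + t^2 * c"
      unfolding A_def by (simp add: power2_eq_square distrib_left)
    ultimately have "0 \<le> t * (A + t * c)" by simp
    then show ?thesis using t by (simp add: zero_le_mult_iff)
  qed
  moreover have "c \<ge> 0" using pd[of h] by (simp add: c_def)
  ultimately have "0 \<le> A" using small_t_nonneg[of c A] by blast
  then show ?thesis by (simp add: A_def h_def)
qed

lemma qf_min_lipschitz:
  fixes L :: "real^'n^'n"
  assumes L: "sym_posdef L" and cv: "convex_on UNIV phi"
  shows "\<exists>C\<ge>0. \<forall>z1 z2 p1 p2. (\<forall>w. qf L phi z1 p1 \<le> qf L phi z1 w) \<and> (\<forall>w. qf L phi z2 p2 \<le> qf L phi z2 w)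
            \<longrightarrow> norm (p1 - p2) \<le> C * norm (z1 - z2)"
proof -
  obtain lam where lam: "lam > 0" "\<forall>v. lam * (norm v)^2 \<le> v \<bullet> (L *v v)"
    using posdef_lower[OF L] by blast
  define KL where "KL = real CARD('n) * real CARD('n) * norm L"
  have KL: "KL \<ge> 0" by (simp add: KL_def)
  have "norm (p1 - p2) \<le> (KL / lam) * norm (z1 - z2)"
    if p1: "\<forall>w. qf L phi z1 p1 \<le> qf L phi z1 w" and p2: "\<forall>w. qf L phi z2 p2 \<le> qf L phi z2 w" for z1 z2 p1 p2
  proof -
    have v1: "phi p2 - phi p1 + (p2 - p1) \<bullet> (L *v (p1 - z1)) \<ge> 0" by (rule qf_min_vi[OF L cv p1])
    have v2: "phi p1 - phi p2 + (p1 - p2) \<bullet> (L *v (p2 - z2)) \<ge> 0" by (rule qf_min_vi[OF L cv p2])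
    define h where "h = p2 - p1"
    have "(p2 - p1) \<bullet> (L *v (p1 - z1)) + (p1 - p2) \<bullet> (L *v (p2 - z2)) \<ge> 0" using v1 v2 by simp
    moreover have "(p2 - p1) \<bullet> (L *v (p1 - z1)) + (p1 - p2) \<bullet> (L *v (p2 - z2))
        = h \<bullet> (L *v (z2 - z1)) - h \<bullet> (L *v h)"
    proof -
      have m: "\<And>X. (p1 - p2) \<bullet> X = - (h \<bullet> X)" by (simp add: h_def inner_diff_left)
      have a: "(p1 - z1) - (p2 - z2) = (z2 - z1) - h" by (simp add: h_def)
      have "(p2 - p1) \<bullet> (L *v (p1 - z1)) + (p1 - p2) \<bullet> (L *v (p2 - z2))
          = h \<bullet> (L *v (p1 - z1)) - h \<bullet> (L *v (p2 - z2))" unfolding m h_def[symmetric] by simp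
      also have "\<dots> = h \<bullet> (L *v ((p1 - z1) - (p2 - z2)))"
        by (simp only: matrix_vector_mult_diff_distrib inner_diff_right)
      also have "\<dots> = h \<bullet> (L *v (z2 - z1)) - h \<bullet> (L *v h)"
        unfolding a by (simp only: matrix_vector_mult_diff_distrib inner_diff_right)
      finally show ?thesis .
    qed
    ultimately have hh: "h \<bullet> (L *v h) \<le> h \<bullet> (L *v (z2 - z1))" by simp
    also have "\<dots> \<le> norm h * norm (L *v (z2 - z1))" by (rule order_trans[OF abs_ge_self Cauchy_Schwarz_ineq2])
    also have "\<dots> \<le> norm h * (KL * norm (z2 - z1))"
      by (intro mult_left_mono) (auto simp: KL_def matvec_bound)
    finally have "lam * (norm h)^2 \<le> norm h * (KL * norm (z2 - z1))" using lam by (meson order_trans)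
    then have "norm h * (lam * norm h) \<le> norm h * (KL * norm (z2 - z1))"
      by (simp add: power2_eq_square algebra_simps)
    then have "lam * norm h \<le> KL * norm (z2 - z1)" if "h \<noteq> 0" using that by simp
    then have "norm h \<le> (KL / lam) * norm (z2 - z1)"
      using lam KL by (cases "h = 0") (auto simp: field_simps)
    then show ?thesis by (simp add: h_def norm_minus_commute)
  qed
  then show ?thesis using KL lam by (intro exI[of _ "KL / lam"]) auto
qed


lemma prox_eq:
  fixes L :: "real^'n^'n"
  assumes L: "sym_posdef L" and cv: "convex_on UNIV phi"
    and p: "\<forall>w. qf L phi z p \<le> qf L phi z w"
  shows "prox L phi z = p"
proof -
  obtain C where C: "C \<ge> 0" "\<forall>z1 z2 p1 p2. (\<forall>w. qf L phi z1 p1 \<le> qf L phi z1 w) \<and> (\<forall>w. qf L phi z2 p2 \<le> qf L phi z2 w)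
            \<longrightarrow> norm (p1 - p2) \<le> C * norm (z1 - z2)"
    using qf_min_lipschitz[OF L cv] by blast
  have "(THE y. \<forall>w. qf L phi z y \<le> qf L phi z w) = p"
  proof (rule the_equality)
    show "\<forall>w. qf L phi z p \<le> qf L phi z w" by fact
    fix y assume "\<forall>w. qf L phi z y \<le> qf L phi z w"
    then have "norm (y - p) \<le> C * norm (z - z)" using C p by blast
    then show "y = p" by simp
  qed
  then show ?thesis by (simp add: prox_def qf_def)
qed

lemma prox_lipschitz:
  fixes L :: "real^'n^'n"
  assumes L: "sym_posdef L" and cv: "convex_on UNIV phi"
  shows "\<exists>C\<ge>0. \<forall>z1 z2. norm (prox L phi z1 - prox L phi z2) \<le> C * norm (z1 - z2)"
proof -
  obtain C where C: "C \<ge> 0" "\<forall>z1 z2 p1 p2. (\<forall>w. qf L phi z1 p1 \<le> qf L phi z1 w) \<and> (\<forall>w. qf L phi z2 p2 \<le> qf L phi z2 w)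
            \<longrightarrow> norm (p1 - p2) \<le> C * norm (z1 - z2)"
    using qf_min_lipschitz[OF L cv] by blast
  have "norm (prox L phi z1 - prox L phi z2) \<le> C * norm (z1 - z2)" for z1 z2
  proof -
    obtain p1 where p1: "\<forall>w. qf L phi z1 p1 \<le> qf L phi z1 w" using qf_min_exists[OF L cv] by blast
    obtain p2 where p2: "\<forall>w. qf L phi z2 p2 \<le> qf L phi z2 w" using qf_min_exists[OF L cv] by blast
    show ?thesis using C p1 p2 prox_eq[OF L cv p1] prox_eq[OF L cv p2] by blast
  qed
  with C show ?thesis by blast
qed

lemma Fnat_continuous:
  fixes L :: "real^'n^'n"
  assumes L: "sym_posdef L" and cv: "convex_on UNIV phi" and gc: "continuous_on UNIV gradf"
  shows "continuous_on UNIV (Fnat L gradf phi)"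
proof -
  obtain C where C: "C \<ge> 0" "\<forall>z1 z2. norm (prox L phi z1 - prox L phi z2) \<le> C * norm (z1 - z2)"
    using prox_lipschitz[OF L cv] by blast
  have pc: "continuous_on UNIV (prox L phi)"
  proof (rule continuous_onI)
    fix x :: "real^'n" and e :: real assume "x \<in> UNIV" "e > 0"
    show "\<exists>d>0. \<forall>x'\<in>UNIV. dist x' x < d \<longrightarrow> dist (prox L phi x') (prox L phi x) \<le> e"
    proof (intro exI[of _ "e / (C + 1)"] conjI ballI impI)
      show "e / (C + 1) > 0" using \<open>e > 0\<close> C by auto
      fix x' :: "real^'n" assume "dist x' x < e / (C + 1)"
      then have "C * dist x' x \<le> (C + 1) * (e / (C + 1))" using C
        by (intro mult_mono) auto
      also have "\<dots> = e" using C by simp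
      finally show "dist (prox L phi x') (prox L phi x) \<le> e"
        using C(2) by (metis dist_norm order_trans)
    qed
  qed
  have mc: "continuous_on UNIV (\<lambda>x. matrix_inv L *v gradf x)"
    using continuous_on_compose[OF gc matrix_vector_mult_linear_continuous_on] by (simp add: o_def)
  show ?thesis unfolding Fnat_def
    by (intro continuous_intros continuous_on_compose2[OF pc] mc) auto
qed

lemma Fnat_stationary:
  fixes L :: "real^'n^'n"
  assumes L: "sym_posdef L" and cv: "convex_on UNIV phi" and st: "stationary gradf phi x"
  shows "Fnat L gradf phi x = 0"
proof -
  obtain v where v: "v \<in> subdiff phi x" "gradf x + v = 0" using st by (auto simp: stationary_def)
  have sym: "transpose L = L" using L by (simp add: sym_posdef_def)
  have pd: "\<And>v. v \<bullet> (L *v v) \<ge> 0" using L unfolding sym_posdef_def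
    by (metis inner_zero_left matrix_vector_mult_0_right order_less_imp_le order_refl)
  define z where "z = x - matrix_inv L *v gradf x"
  have Lz: "L *v (x - z) = gradf x"
    using posdef_invertible[OF L] by (simp add: z_def matrix_vector_mul_assoc)
  have "qf L phi z x \<le> qf L phi z w" for w
  proof -
    define h where "h = w - x"
    have sub: "phi w \<ge> phi x + v \<bullet> h" using v(1) by (simp add: subdiff_def h_def)
    have e: "w - z = (x - z) + h" by (simp add: h_def)
    have "(w - z) \<bullet> (L *v (w - z)) = (x - z) \<bullet> (L *v (x - z)) + 2 * (h \<bullet> gradf x) + h \<bullet> (L *v h)"
      unfolding e using quad_expand[OF sym, of "x - z" 1 h] by (simp add: Lz)
    moreover have "v \<bullet> h + h \<bullet> gradf x = 0" using v(2)
      by (metis add.commute inner_commute inner_left_distrib inner_zero_left)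
    ultimately show ?thesis using sub pd[of h] unfolding qf_def by linarith
  qed
  then have "prox L phi z = x" by (intro prox_eq[OF L cv]) auto
  then show ?thesis by (simp add: Fnat_def z_def)
qed


definition lev :: "(nat \<Rightarrow> 'a set) \<Rightarrow> nat \<Rightarrow> 'a \<Rightarrow> nat" where
  "lev S m y = (GREATEST i. i \<le> m \<and> y \<in> S i)"

definition Pot :: "nat \<Rightarrow> (nat \<Rightarrow> real) \<Rightarrow> (nat \<Rightarrow> nat) \<Rightarrow> real" where
  "Pot m eps c = (\<Sum>i<m. \<Sum>j<c i. eps j)"

locale trunc_setup =
  fixes G :: "'a::real_normed_vector \<Rightarrow> ereal" and S :: "nat \<Rightarrow> 'a set" and m :: nat
    and T :: "'a \<Rightarrow> real \<Rightarrow> 'a" and eps :: "nat \<Rightarrow> real" and \<delta> :: ereal and \<kappa> :: real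
  assumes S0: "S 0 = UNIV"
    and nest: "\<forall>i<m. S (Suc i) \<subseteq> S i"
    and ti: "\<forall>y\<in>S m. G y \<ge> \<delta>"
    and tii: "\<forall>a i y. 0 < a \<and> ereal a \<le> \<delta> \<and> i < m \<and> y \<in> S i - S (Suc i) \<longrightarrow>
         (G y \<ge> ereal a \<longrightarrow> T y a = y) \<and>
         (G y < ereal a \<longrightarrow> T y a \<in> S (Suc i) \<and> G (T y a) \<ge> ereal a
                                     \<and> norm (T y a - y) \<le> \<kappa> * a)"
    and eps_pos: "\<forall>j. eps j > 0"
    and eps_le: "\<forall>j. ereal (eps j) \<le> \<delta>"
    and kap: "\<kappa> > 0"
begin

lemma nest_le: "i \<le> j \<Longrightarrow> j \<le> m \<Longrightarrow> S j \<subseteq> S i"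
proof (induction j)
  case 0 then show ?case by simp
next
  case (Suc j)
  show ?case
  proof (cases "i = Suc j")
    case True then show ?thesis by simp
  next
    case False
    then have "i \<le> j" using Suc by simp
    have a: "S (Suc j) \<subseteq> S j" using nest Suc.prems(2) by simp
    have b: "S j \<subseteq> S i" using Suc.IH \<open>i \<le> j\<close> Suc.prems(2) by simp
    show ?thesis by (rule subset_trans[OF a b])
  qed
qed

lemma lev_props: "lev S m y \<le> m" "y \<in> S (lev S m y)" "\<And>j. j \<le> m \<Longrightarrow> y \<in> S j \<Longrightarrow> j \<le> lev S m y"
proof -
  have P0: "0 \<le> m \<and> y \<in> S 0" using S0 by simp
  have b: "\<forall>j. j \<le> m \<and> y \<in> S j \<longrightarrow> j \<le> m" by simp
  have "lev S m y \<le> m \<and> y \<in> S (lev S m y)" unfolding lev_def by (rule GreatestI_nat[of _ 0 m]) (use S0 in auto)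
  then show "lev S m y \<le> m" "y \<in> S (lev S m y)" by auto
  show "\<And>j. j \<le> m \<Longrightarrow> y \<in> S j \<Longrightarrow> j \<le> lev S m y"
    unfolding lev_def by (rule Greatest_le_nat) (use b in auto)
qed

lemma lvl_iff: "y \<in> lvl S m i - lvl S m (Suc i) \<longleftrightarrow> i = lev S m y"
proof
  assume a: "y \<in> lvl S m i - lvl S m (Suc i)"
  then have im: "i \<le> m" and yi: "y \<in> S i" by (auto simp: lvl_def split: if_splits)
  have "i \<le> lev S m y" using lev_props(3)[OF im yi] .
  moreover have "\<not> i < lev S m y"
  proof
    assume "i < lev S m y"
    then have "S (lev S m y) \<subseteq> S (Suc i)" "Suc i \<le> m" using nest_le lev_props(1)[of y] by auto
    then show False using a lev_props(2)[of y] by (auto simp: lvl_def)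
  qed
  ultimately show "i = lev S m y" by simp
next
  assume i: "i = lev S m y"
  have "y \<in> lvl S m i" using i lev_props(1,2) by (simp add: lvl_def)
  moreover have "y \<notin> lvl S m (Suc i)"
    using i lev_props(3)[of "Suc i" y] by (auto simp: lvl_def)
  ultimately show "y \<in> lvl S m i - lvl S m (Suc i)" by simp
qed

lemma Pot_upd: "i < m \<Longrightarrow> Pot m eps (c(i := Suc (c i))) = Pot m eps c + eps (c i)"
proof -
  assume i: "i < m"
  have "Pot m eps (c(i := Suc (c i))) = (\<Sum>k<m. (\<Sum>j<c k. eps j) + (if k = i then eps (c i) else 0))"
    unfolding Pot_def by (intro sum.cong) auto
  also have "\<dots> = Pot m eps c + eps (c i)" using i by (simp add: sum.distrib Pot_def)
  finally show ?thesis .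
qed

lemma Pot_mono: "\<forall>i. c i \<le> c' i \<Longrightarrow> Pot m eps c \<le> Pot m eps c'"
  unfolding Pot_def using eps_pos
  by (intro sum_mono sum_mono2) (auto simp: less_imp_le)

lemma step_facts:
  assumes i: "i = lev S m y" and lt: "G y < ereal (eps (c i))"
  shows "i < m" "T y (eps (c i)) \<in> S (Suc i)" "G (T y (eps (c i))) \<ge> ereal (eps (c i))"
    "norm (T y (eps (c i)) - y) \<le> \<kappa> * eps (c i)" "Suc i \<le> lev S m (T y (eps (c i)))"
proof -
  show im: "i < m"
  proof (rule ccontr)
    assume "\<not> i < m"
    then have "i = m" using i lev_props(1)[of y] by simp
    then have "G y \<ge> \<delta>" using ti lev_props(2)[of y] i by auto
    then show False using lt eps_le by (meson leD order.trans)
  qed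
  have yi: "y \<in> S i - S (Suc i)" using lvl_iff[of y i] i im by (auto simp: lvl_def)
  have "T y (eps (c i)) \<in> S (Suc i) \<and> G (T y (eps (c i))) \<ge> ereal (eps (c i)) \<and> norm (T y (eps (c i)) - y) \<le> \<kappa> * eps (c i)"
    using tii[rule_format, of "eps (c i)" i y] eps_pos eps_le im yi lt by auto
  then show "T y (eps (c i)) \<in> S (Suc i)" "G (T y (eps (c i))) \<ge> ereal (eps (c i))"
    "norm (T y (eps (c i)) - y) \<le> \<kappa> * eps (c i)" by auto
  then show "Suc i \<le> lev S m (T y (eps (c i)))" using lev_props(3) im by auto
qed

lemma loop_facts:
  assumes "trunc_loop G S m T eps c y c' y'"
  shows "(\<forall>i. c i \<le> c' i) \<and> lev S m y \<le> lev S m y' \<and> (\<forall>i. c' i \<noteq> c i \<longrightarrow> i < lev S m y')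
    \<and> norm (y' - y) \<le> \<kappa> * (Pot m eps c' - Pot m eps c) \<and> G y' \<ge> ereal (eps (c' (lev S m y')))"
  using assms
proof (induction rule: trunc_loop.induct)
  case (stop x i c)
  then have "i = lev S m x" using lvl_iff by blast
  then show ?case using stop by simp
next
  case (step x i c c' x')
  have i: "i = lev S m x" using step(1) lvl_iff by blast
  note sf = step_facts[of i x c, OF i step(2)]
  let ?z = "T x (eps (c i))"
  let ?c1 = "c(i := Suc (c i))"
  have P: "Pot m eps ?c1 = Pot m eps c + eps (c i)" using Pot_upd[OF sf(1)] .
  have IH: "(\<forall>j. ?c1 j \<le> c' j) \<and> lev S m ?z \<le> lev S m x' \<and> (\<forall>j. c' j \<noteq> ?c1 j \<longrightarrow> j < lev S m x')
    \<and> norm (x' - ?z) \<le> \<kappa> * (Pot m eps c' - Pot m eps ?c1) \<and> G x' \<ge> ereal (eps (c' (lev S m x')))"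
    using step(4) .
  have c1: "\<forall>j. c j \<le> c' j"
  proof
    fix j show "c j \<le> c' j" using IH[THEN conjunct1, rule_format, of j] by (cases "j = i") auto
  qed
  have lv: "lev S m x \<le> lev S m x'" using IH sf(5) i by linarith
  have ch: "\<forall>j. c' j \<noteq> c j \<longrightarrow> j < lev S m x'"
  proof (intro allI impI)
    fix j assume "c' j \<noteq> c j"
    show "j < lev S m x'"
    proof (cases "j = i")
      case True then show ?thesis using sf(5) IH by linarith
    next
      case False then show ?thesis using IH \<open>c' j \<noteq> c j\<close> by auto
    qed
  qed
  have "norm (x' - x) \<le> norm (x' - ?z) + norm (?z - x)" by (rule norm_diff_triangle_le) auto
  also have "\<dots> \<le> \<kappa> * (Pot m eps c' - Pot m eps ?c1) + \<kappa> * eps (c i)" using IH sf(4) by linarith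
  also have "\<dots> = \<kappa> * (Pot m eps c' - Pot m eps c)" using P by (simp add: algebra_simps)
  finally show ?case using c1 lv ch IH by blast
qed

lemma loop_fun_bound:
  assumes "trunc_loop G S m T eps c y c' y'"
    and lip: "\<forall>u\<in>cball 0 Rb. \<forall>v\<in>cball 0 Rb. \<bar>h u - h v\<bar> \<le> Lh * norm (u - v)" and Lh: "Lh \<ge> 0"
  shows "norm y + \<kappa> * (Pot m eps c' - Pot m eps c) \<le> Rb \<longrightarrow> h y' \<le> h y + Lh * \<kappa> * (Pot m eps c' - Pot m eps c)"
  using assms(1)
proof (induction rule: trunc_loop.induct)
  case (stop x i c)
  then show ?case by simp
next
  case (step x i c c' x')
  have i: "i = lev S m x" using step(1) lvl_iff by blast
  note sf = step_facts[of i x c, OF i step(2)]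
  let ?z = "T x (eps (c i))"
  let ?c1 = "c(i := Suc (c i))"
  have P: "Pot m eps ?c1 = Pot m eps c + eps (c i)" using Pot_upd[OF sf(1)] .
  have mono: "Pot m eps ?c1 \<le> Pot m eps c'"
    using loop_facts[OF step(3)] by (intro Pot_mono) auto
  show ?case
  proof
    assume R: "norm x + \<kappa> * (Pot m eps c' - Pot m eps c) \<le> Rb"
    have nz: "norm ?z \<le> norm x + \<kappa> * eps (c i)"
      using sf(4) norm_triangle_sub[of ?z x] by linarith
    have Rz: "norm ?z + \<kappa> * (Pot m eps c' - Pot m eps ?c1) \<le> Rb"
      using R nz P by (simp add: algebra_simps)
    have h1: "h x' \<le> h ?z + Lh * \<kappa> * (Pot m eps c' - Pot m eps ?c1)" using step(4) Rz by blast
    have pos: "0 \<le> \<kappa> * (Pot m eps c' - Pot m eps ?c1)" using mono kap by simp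
    have e1: "\<kappa> * (Pot m eps c' - Pot m eps c) = \<kappa> * (Pot m eps c' - Pot m eps ?c1) + \<kappa> * eps (c i)"
      using P by (simp add: algebra_simps)
    have e2: "\<kappa> * eps (c i) \<ge> 0" using kap eps_pos by (simp add: less_imp_le)
    have "norm x \<le> Rb" using R pos e1 e2 by linarith
    moreover have "norm ?z \<le> Rb" using Rz pos by linarith
    ultimately have "\<bar>h ?z - h x\<bar> \<le> Lh * norm (?z - x)" using lip by auto
    also have "\<dots> \<le> Lh * (\<kappa> * eps (c i))" using sf(4) Lh by (intro mult_left_mono) auto
    finally have "h ?z \<le> h x + Lh * \<kappa> * eps (c i)" by simp
    then show "h x' \<le> h x + Lh * \<kappa> * (Pot m eps c' - Pot m eps c)"
      using h1 P by (simp add: algebra_simps)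
  qed
qed

lemma loop_stop_det:
  assumes "trunc_loop G S m T eps c y c' y'" and "G y \<ge> ereal (eps (c (lev S m y)))"
  shows "c' = c \<and> y' = y"
  using assms(1)
proof (cases rule: trunc_loop.cases)
  case (stop i) then show ?thesis by simp
next
  case (step i)
  then have "i = lev S m y" using lvl_iff by blast
  then show ?thesis using step assms(2) by auto
qed

lemma Pot_bound: "Pot m eps c \<le> real m * suminf eps" if "summable eps"
proof -
  have "(\<Sum>j<c i. eps j) \<le> suminf eps" for i
    using that eps_pos by (intro sum_le_suminf) (auto simp: less_imp_le)
  then have "Pot m eps c \<le> (\<Sum>i<m. suminf eps)" unfolding Pot_def by (intro sum_mono) auto
  then show ?thesis by simp
qed

end

lemma f_quot_tendsto:
  fixes f :: "'a::real_inner \<Rightarrow> real"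
  assumes fd: "(f has_derivative (\<lambda>h. gx \<bullet> h)) (at x)"
  shows "((\<lambda>t. (f (x + t *\<^sub>R v) - f x) / t) \<longlongrightarrow> gx \<bullet> v) (at_right 0)"
proof -
  have l: "((\<lambda>t::real. x + t *\<^sub>R v) has_derivative (\<lambda>t. t *\<^sub>R v)) (at 0)"
    by (auto intro!: derivative_eq_intros)
  have fd0: "(f has_derivative (\<lambda>h. gx \<bullet> h)) (at (x + 0 *\<^sub>R v))" using fd by simp
  have "((\<lambda>t. f (x + t *\<^sub>R v)) has_derivative (\<lambda>t. gx \<bullet> (t *\<^sub>R v))) (at 0)"
    using has_derivative_compose[OF l fd0] by (simp add: o_def)
  moreover have "(\<lambda>t. gx \<bullet> (t *\<^sub>R v)) = (*) (gx \<bullet> v)" by (auto simp: mult.commute)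
  ultimately have "((\<lambda>t. f (x + t *\<^sub>R v)) has_field_derivative (gx \<bullet> v)) (at 0)"
    by (simp add: has_field_derivative_def)
  then have "((\<lambda>h. (f (x + (0 + h) *\<^sub>R v) - f (x + 0 *\<^sub>R v)) / h) \<longlongrightarrow> gx \<bullet> v) (at 0)"
    by (simp add: DERIV_def)
  then have "((\<lambda>h. (f (x + h *\<^sub>R v) - f x) / h) \<longlongrightarrow> gx \<bullet> v) (at 0)" by simp
  then show ?thesis by (rule tendsto_mono[OF at_le, rotated]) simp
qed

lemma dd_tendsto:
  fixes f phi :: "'a::real_inner \<Rightarrow> real"
  assumes fd: "(f has_derivative (\<lambda>h. gx \<bullet> h)) (at x)" and cv: "convex_on UNIV phi"
  shows "((\<lambda>t. ((\<lambda>y. f y + phi y) (x + t *\<^sub>R v) - (\<lambda>y. f y + phi y) x) / t)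
            \<longlongrightarrow> dir_deriv (\<lambda>y. f y + phi y) x v) (at_right 0)"
proof -
  obtain D where D: "((\<lambda>t. (phi (x + t *\<^sub>R v) - phi x) / t) \<longlongrightarrow> D) (at_right 0)"
    using convex_dd_exists[OF cv] by blast
  have "((\<lambda>t. (f (x + t *\<^sub>R v) - f x) / t + (phi (x + t *\<^sub>R v) - phi x) / t) \<longlongrightarrow> gx \<bullet> v + D) (at_right 0)"
    by (intro tendsto_add f_quot_tendsto[OF fd] D)
  then have c: "((\<lambda>t. ((\<lambda>y. f y + phi y) (x + t *\<^sub>R v) - (\<lambda>y. f y + phi y) x) / t) \<longlongrightarrow> gx \<bullet> v + D) (at_right 0)"
    by (simp add: add_divide_distrib[symmetric] algebra_simps)
  then have "dir_deriv (\<lambda>y. f y + phi y) x v = gx \<bullet> v + D"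
    unfolding dir_deriv_def by (intro tendsto_Lim) simp_all
  then show ?thesis using c by simp
qed

lemma dd_lipschitz:
  fixes h :: "'a::real_normed_vector \<Rightarrow> real"
  assumes tv: "((\<lambda>t. (h (x + t *\<^sub>R v) - h x) / t) \<longlongrightarrow> dir_deriv h x v) (at_right 0)"
    and tw: "((\<lambda>t. (h (x + t *\<^sub>R w) - h x) / t) \<longlongrightarrow> dir_deriv h x w) (at_right 0)"
    and lip: "\<forall>u\<in>cball 0 Rb. \<forall>u'\<in>cball 0 Rb. \<bar>h u - h u'\<bar> \<le> Lh * norm (u - u')"
    and x: "norm x < Rb" and v: "norm v \<le> 1" and w: "norm w \<le> 1"
  shows "\<bar>dir_deriv h x v - dir_deriv h x w\<bar> \<le> Lh * norm (v - w)"
proof -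
  have lim: "((\<lambda>t. \<bar>(h (x + t *\<^sub>R v) - h x) / t - (h (x + t *\<^sub>R w) - h x) / t\<bar>)
       \<longlongrightarrow> \<bar>dir_deriv h x v - dir_deriv h x w\<bar>) (at_right 0)"
    by (intro tendsto_rabs tendsto_diff tv tw)
  have "\<forall>\<^sub>F t in at_right 0. \<bar>(h (x + t *\<^sub>R v) - h x) / t - (h (x + t *\<^sub>R w) - h x) / t\<bar> \<le> Lh * norm (v - w)"
  proof (rule eventually_mono[OF eventually_at_right_real[of 0 "Rb - norm x"]])
    show "0 < Rb - norm x" using x by simp
  next
    fix t assume t: "t \<in> {0<..<Rb - norm x}"
    have nv: "norm (x + t *\<^sub>R v) \<le> Rb"
    proof -
      have "norm (x + t *\<^sub>R v) \<le> norm x + t * norm v" using t by (metis norm_triangle_ineq norm_scaleR abs_of_pos greaterThanLessThan_iff)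
      also have "\<dots> \<le> norm x + t" using t v by (simp add: mult_left_le)
      finally show ?thesis using t by simp
    qed
    have nw: "norm (x + t *\<^sub>R w) \<le> Rb"
    proof -
      have "norm (x + t *\<^sub>R w) \<le> norm x + t * norm w" using t by (metis norm_triangle_ineq norm_scaleR abs_of_pos greaterThanLessThan_iff)
      also have "\<dots> \<le> norm x + t" using t w by (simp add: mult_left_le)
      finally show ?thesis using t by simp
    qed
    have "\<bar>h (x + t *\<^sub>R v) - h (x + t *\<^sub>R w)\<bar> \<le> Lh * norm ((x + t *\<^sub>R v) - (x + t *\<^sub>R w))"
      using lip[rule_format, of "x + t *\<^sub>R v" "x + t *\<^sub>R w"] nv nw by simp
    also have "norm ((x + t *\<^sub>R v) - (x + t *\<^sub>R w)) = t * norm (v - w)"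
      using t by (simp add: scaleR_diff_right[symmetric])
    finally have a: "\<bar>h (x + t *\<^sub>R v) - h (x + t *\<^sub>R w)\<bar> \<le> t * (Lh * norm (v - w))" by (simp add: mult_ac)
    have "(h (x + t *\<^sub>R v) - h x) / t - (h (x + t *\<^sub>R w) - h x) / t = (h (x + t *\<^sub>R v) - h (x + t *\<^sub>R w)) / t"
      by (simp add: diff_divide_distrib)
    then show "\<bar>(h (x + t *\<^sub>R v) - h x) / t - (h (x + t *\<^sub>R w) - h x) / t\<bar> \<le> Lh * norm (v - w)"
      using a t by (simp add: abs_div pos_divide_le_eq mult.commute)
  qed
  then show ?thesis using tendsto_upperbound[OF lim] by simp
qed


lemma quad_vertex:
  fixes G c D a :: real
  assumes G: "G > 0" and a: "0 \<le> a" "a \<le> D"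
    and mn: "\<forall>t. 0 \<le> t \<and> t \<le> D \<longrightarrow> t*G - t^2/2*c \<le> a*G - a^2/2*c"
  shows "a * c \<le> G"
proof (rule ccontr)
  assume ac: "\<not> a * c \<le> G"
  have c: "c > 0"
  proof (rule ccontr)
    assume "\<not> c > 0"
    then have "a * c \<le> 0" using a by (intro mult_nonneg_nonpos) auto
    then show False using ac G by simp
  qed
  define t where "t = G / c"
  have t: "0 \<le> t" "t < a" using ac c G by (auto simp: t_def pos_divide_less_eq)
  have "t*G - t^2/2*c \<le> a*G - a^2/2*c" using mn t a by auto
  moreover have "(t*G - t^2/2*c) - (a*G - a^2/2*c) = c/2 * (a - t)^2"
    using c by (simp add: t_def power2_eq_square field_simps)
  moreover have "c/2 * (a - t)^2 > 0" using c t by simp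
  ultimately show False by linarith
qed

lemma quad_partial:
  fixes G c D a t :: real
  assumes G: "G > 0" and a: "0 \<le> a" "a \<le> D"
    and mn: "\<forall>t. 0 \<le> t \<and> t \<le> D \<longrightarrow> t*G - t^2/2*c \<le> a*G - a^2/2*c"
    and t: "0 \<le> t" "t \<le> a"
  shows "t*G - t^2/2*c \<ge> t*G/2"
proof (cases "c \<le> 0")
  case True
  then have "t^2/2*c \<le> 0" by (simp add: mult_nonneg_nonpos)
  moreover have "t * G \<ge> 0" using t G by simp
  ultimately show ?thesis by linarith
next
  case False
  have "a * c \<le> G" by (rule quad_vertex[OF G a mn])
  moreover have "t * c \<le> a * c" using t False by (intro mult_right_mono) auto
  ultimately have "t * c \<le> G" by simp
  then have "t * (t * c) \<le> t * G" using t by (intro mult_left_mono) auto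
  then show ?thesis by (simp add: power2_eq_square algebra_simps)
qed

lemma quad_min_lower:
  fixes G c D a KB :: real
  assumes G: "G > 0" and KB: "KB > 0" and cb: "c \<le> KB * G" and D: "D > 0" and a: "0 \<le> a" "a \<le> D"
    and mn: "\<forall>t. 0 \<le> t \<and> t \<le> D \<longrightarrow> t*G - t^2/2*c \<le> a*G - a^2/2*c"
  shows "a \<ge> min D (1/KB)"
proof (rule ccontr)
  assume "\<not> a \<ge> min D (1/KB)"
  then have lt: "a < min D (1/KB)" by linarith
  define t0 where "t0 = min D (1/KB)"
  have t0: "0 < t0" "t0 \<le> D" "t0 \<le> 1/KB" "a < t0" using D KB lt by (auto simp: t0_def)
  have "t0*G - t0^2/2*c \<le> a*G - a^2/2*c" using mn t0 by auto
  moreover have "(t0*G - t0^2/2*c) - (a*G - a^2/2*c) = (t0 - a) * (G - (t0 + a)/2 * c)"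
    by (simp add: power2_eq_square field_simps)
  moreover have "(t0 + a)/2 * c < G"
  proof (cases "c \<le> 0")
    case True
    have "(t0 + a)/2 * c \<le> 0" using True t0 a by (intro mult_nonneg_nonpos) auto
    then show ?thesis using G by simp
  next
    case False
    have "(t0 + a)/2 < t0" using t0 by simp
    then have "(t0 + a)/2 * c < t0 * c" using False by (intro mult_strict_right_mono) auto
    also have "\<dots> \<le> (1/KB) * (KB * G)" using t0 cb False KB by (intro mult_mono) auto
    also have "\<dots> = G" using KB by simp
    finally show ?thesis .
  qed
  then have "(t0 - a) * (G - (t0 + a)/2 * c) > 0" using t0 by simp
  ultimately show False by linarith
qed


lemma mv_neg: "(A::real^'n^'m) *v (- v) = - (A *v v)"
  by (simp add: vec_eq_iff matrix_vector_mult_def sum_negf)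

lemma safe_step_props:
  assumes G: "Gs y (sgn v) > 0" and v: "v \<noteq> 0"
  shows "0 < safe_step Gs y v" "safe_step Gs y v \<le> norm v"
    "\<And>e'. Gs y (sgn v) \<ge> ereal e' \<Longrightarrow> safe_step Gs y v \<ge> min e' (norm v)"
proof -
  have nv: "norm v > 0" using v by simp
  have "0 < safe_step Gs y v \<and> safe_step Gs y v \<le> norm v \<and>
    (\<forall>e'. Gs y (sgn v) \<ge> ereal e' \<longrightarrow> safe_step Gs y v \<ge> min e' (norm v))"
  proof (cases "Gs y (sgn v)" rule: ereal_cases)
    case (real r)
    then have r: "r > 0" using G by simp
    have "safe_step Gs y v = min r (norm v)" using real by (simp add: safe_step_def min_def)
    then show ?thesis using r nv real by auto
  next
    case PInf
    have "safe_step Gs y v = norm v" using PInf by (simp add: safe_step_def)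
    then show ?thesis using nv by auto
  next
    case MInf
    then show ?thesis using G by simp
  qed
  then show "0 < safe_step Gs y v" "safe_step Gs y v \<le> norm v"
    "\<And>e'. Gs y (sgn v) \<ge> ereal e' \<Longrightarrow> safe_step Gs y v \<ge> min e' (norm v)" by auto
qed

locale alg =
  fixes f phi psi :: "real^'n \<Rightarrow> real" and gradf :: "real^'n \<Rightarrow> real^'n"
    and u :: "real^'n \<Rightarrow> real" and d g :: "real^'n \<Rightarrow> real^'n"
    and Gs :: "real^'n \<Rightarrow> real^'n \<Rightarrow> ereal"
    and S :: "nat \<Rightarrow> (real^'n) set" and m :: nat and \<delta> :: ereal and \<kappa> :: real
    and T :: "real^'n \<Rightarrow> real \<Rightarrow> real^'n"
    and \<eta> \<eta>1 \<eta>2 r1 r2 \<Delta>max \<gamma>1 \<gamma>2 :: real and eps :: "nat \<Rightarrow> real" and ell :: "real \<Rightarrow> real"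
    and x xt s sC ssel sbar :: "nat \<Rightarrow> real^'n" and B :: "nat \<Rightarrow> real^'n^'n"
    and \<Delta> \<alpha>C \<rho>1 \<rho>2 \<alpha> :: "nat \<Rightarrow> real" and c :: "nat \<Rightarrow> nat \<Rightarrow> nat"
  assumes
    f_deriv: "\<forall>y. (f has_derivative (\<lambda>h. gradf y \<bullet> h)) (at y)"
    and gradf_cont: "continuous_on UNIV gradf"
    and phi_convex: "convex_on UNIV phi"
    and psi_def: "psi = (\<lambda>y. f y + phi y)"
    and g_def: "g = (\<lambda>y. u y *\<^sub>R d y)"
    and pg_nonstat: "\<forall>y. \<not> stationary gradf phi y \<longrightarrow>
         norm (d y) = 1 \<and> dir_deriv psi y (d y) < 0 \<and> dir_deriv psi y (d y) \<le> u y \<and> u y < 0"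
    and pg_stat: "\<forall>y. stationary gradf phi y \<longrightarrow> d y = 0 \<and> u y = 0"
    and Gs_pos: "\<forall>y v. norm v = 1 \<longrightarrow> Gs y v > 0"
    and S0: "S 0 = UNIV"
    and S_nested: "\<forall>i<m. S (Suc i) \<subseteq> S i"
    and \<delta>_pos: "\<delta> > 0"
    and \<kappa>_pos: "\<kappa> > 0"
    and trunc_i: "\<forall>y\<in>S m. Gamma_min psi y \<ge> \<delta>"
    and trunc_ii: "\<forall>a i y. 0 < a \<and> ereal a \<le> \<delta> \<and> i < m \<and> y \<in> S i - S (Suc i) \<longrightarrow>
         (Gamma_min psi y \<ge> ereal a \<longrightarrow> T y a = y) \<and>
         (Gamma_min psi y < ereal a \<longrightarrow> T y a \<in> S (Suc i) \<and> Gamma_min psi (T y a) \<ge> ereal a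
                                     \<and> norm (T y a - y) \<le> \<kappa> * a)"
    and params: "0 < \<eta> \<and> \<eta> < \<eta>1 \<and> \<eta>1 < \<eta>2 \<and> \<eta>2 < 1 \<and> 0 < r1 \<and> r1 < 1 \<and> 1 < r2
                 \<and> \<Delta>max > 0 \<and> \<gamma>1 > 0 \<and> \<gamma>2 > 0"
    and eps_pos: "\<forall>j. eps j > 0"
    and eps_decr: "\<forall>j. eps (Suc j) < eps j"
    and eps_summable: "summable eps"
    and eps_le: "\<forall>j. ereal (eps j) \<le> \<delta>"
    and ell_range: "\<forall>t>0. 0 \<le> ell t \<and> ell t \<le> 1/2"
    and ell_mono: "\<forall>a b. 0 < a \<and> a \<le> b \<longrightarrow> ell b \<le> ell a"
    and ell_lim: "(ell \<longlongrightarrow> 0) (at_right 0)"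
    and \<Delta>0: "\<Delta> 0 > 0"
    and c0: "c 0 = (\<lambda>_. 0)"
    and nonterm: "\<forall>k. g (x k) \<noteq> 0"
    and cauchy: "\<forall>k. 0 \<le> \<alpha>C k \<and> \<alpha>C k \<le> \<Delta> k / norm (g (x k)) \<and>
         (\<forall>t. 0 \<le> t \<and> t \<le> \<Delta> k / norm (g (x k)) \<longrightarrow>
            tr_model (psi (x k)) (g (x k)) (B k) (- (\<alpha>C k *\<^sub>R g (x k)))
              \<le> tr_model (psi (x k)) (g (x k)) (B k) (- (t *\<^sub>R g (x k))))"
    and sC_def: "\<forall>k. sC k = - (\<alpha>C k *\<^sub>R g (x k))"
    and s_tr: "\<forall>k. norm (s k) \<le> \<Delta> k"
    and s_dec1: "\<forall>k. tr_model (psi (x k)) (g (x k)) (B k) 0 - tr_model (psi (x k)) (g (x k)) (B k) (s k)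
         \<ge> \<gamma>1 / 2 * norm (g (x k)) * min (\<Delta> k) (\<gamma>2 * norm (g (x k)))"
    and s_dec2: "\<forall>k. tr_model (psi (x k)) (g (x k)) (B k) 0 - tr_model (psi (x k)) (g (x k)) (B k) (s k)
         \<ge> (1 - ell (norm (s k))) * (tr_model (psi (x k)) (g (x k)) (B k) 0
                                     - tr_model (psi (x k)) (g (x k)) (B k) (sC k))"
    and \<rho>1_def: "\<forall>k. \<rho>1 k = (psi (x k) - psi (x k + s k)) /
         (tr_model (psi (x k)) (g (x k)) (B k) 0 - tr_model (psi (x k)) (g (x k)) (B k) (s k))"
    and ssel_def: "\<forall>k. ssel k =
         (if tr_model (psi (x k)) (g (x k)) (B k) 0
             - tr_model (psi (x k)) (g (x k)) (B k) (safe_step Gs (x k) (s k) *\<^sub>R sgn (s k))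
           < safe_step Gs (x k) (s k) / (2 * norm (s k)) *
             (tr_model (psi (x k)) (g (x k)) (B k) 0 - tr_model (psi (x k)) (g (x k)) (B k) (s k))
          then sC k else s k)"
    and sbar_def: "\<forall>k. sbar k = sgn (ssel k)"
    and \<alpha>_def: "\<forall>k. \<alpha> k = safe_step Gs (x k) (ssel k)"
    and \<rho>2_def: "\<forall>k. \<rho>2 k = (psi (x k) - psi (x k + \<alpha> k *\<^sub>R sbar k)) /
         (tr_model (psi (x k)) (g (x k)) (B k) 0
            - tr_model (psi (x k)) (g (x k)) (B k) (\<alpha> k *\<^sub>R sbar k))"
    and update: "\<forall>k. (\<rho>1 k \<ge> \<eta>1 \<longrightarrow> xt k = x k + s k \<and>
            \<Delta> (Suc k) = (if \<rho>1 k > \<eta>2 then min \<Delta>max (r2 * \<Delta> k) else \<Delta> k)) \<and>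
         (\<rho>1 k < \<eta>1 \<longrightarrow>
            \<Delta> (Suc k) = (if \<rho>2 k < \<eta>1 then r1 * \<Delta> k
                          else if \<rho>2 k > \<eta>2 then min \<Delta>max (r2 * \<Delta> k) else \<Delta> k) \<and>
            xt k = (if \<rho>2 k \<ge> \<eta> then x k + \<alpha> k *\<^sub>R sbar k else x k))"
    and trunc_step: "\<forall>k. trunc_loop (Gamma_min psi) S m T eps (c k) (xt k) (c (Suc k)) (x (Suc k))"
    and A1: "bdd_below (range psi)"
    and A2: "\<forall>y. g y \<noteq> 0 \<longrightarrow> (\<exists>r>0. \<exists>e>0. \<forall>z\<in>ball y r. norm (g z) \<ge> e)"
    and B1: "\<exists>R>0. \<forall>k. x k \<in> ball 0 R"
    and B2: "\<exists>\<kappa>B>0. \<forall>k. norm (B k) \<le> \<kappa>B"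
    and B3: "\<forall>kl. strict_mono kl \<and> convergent (\<lambda>l. x (kl l)) \<and> (\<lambda>l. \<alpha> (kl l)) \<longlonglongrightarrow> 0 \<longrightarrow>
         (\<lambda>l. psi (x (kl l) + \<alpha> (kl l) *\<^sub>R sbar (kl l)) - psi (x (kl l))
               - \<alpha> (kl l) * dir_deriv psi (x (kl l)) (sbar (kl l)))
           \<in> o[sequentially](\<lambda>l. \<alpha> (kl l))"
    and B4: "\<forall>e>0. \<exists>e'>0. \<forall>k. Gamma_min psi (x k) \<ge> ereal e \<longrightarrow> Gs (x k) (sbar k) \<ge> ereal e'"
begin

lemma gy_facts:
  assumes "g y \<noteq> 0"
  shows "\<not> stationary gradf phi y" "norm (d y) = 1" "u y < 0" "norm (g y) = - u y"
        "dir_deriv psi y (d y) \<le> u y" "g y = u y *\<^sub>R d y"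
proof -
  show ns: "\<not> stationary gradf phi y" using assms pg_stat g_def by auto
  show "norm (d y) = 1" "u y < 0" "dir_deriv psi y (d y) \<le> u y" using pg_nonstat ns by auto
  show ge: "g y = u y *\<^sub>R d y" using g_def by simp
  have "norm (d y) = 1" "u y < 0" using pg_nonstat ns by auto
  then show "norm (g y) = - u y" using ge by simp
qed

lemma gk: "g (x k) \<noteq> 0" using nonterm by auto

lemma gk_pos: "norm (g (x k)) > 0" using gk by simp

definition "kB = (SOME kb. kb > 0 \<and> (\<forall>k. norm (B k) \<le> kb))"

lemma kB: "kB > 0" "norm (B k) \<le> kB"
  using someI_ex[OF B2] unfolding kB_def by auto

definition "KB = real CARD('n) * real CARD('n) * kB"

lemma KB_pos: "KB > 0" using kB by (simp add: KB_def)

lemma quadB: "\<bar>v \<bullet> (B k *v v)\<bar> \<le> KB * (norm v)^2"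
proof -
  have "real CARD('n) * real CARD('n) * norm (B k) \<le> KB"
    unfolding KB_def using kB by (intro mult_left_mono) auto
  then have "real CARD('n) * real CARD('n) * norm (B k) * (norm v)^2 \<le> KB * (norm v)^2"
    by (intro mult_right_mono) auto
  then show ?thesis using quad_bound[of v "B k"] by linarith
qed

definition "mk k v = tr_model (psi (x k)) (g (x k)) (B k) v"

lemma mk_diff: "mk k 0 - mk k v = - (g (x k) \<bullet> v) - 1/2 * (v \<bullet> (B k *v v))"
  by (simp add: mk_def tr_model_def)

definition "Dm = max (\<Delta> 0) \<Delta>max"

lemma \<Delta>_cases: "\<Delta> (Suc k) = r1 * \<Delta> k \<or> \<Delta> (Suc k) = min \<Delta>max (r2 * \<Delta> k) \<or> \<Delta> (Suc k) = \<Delta> k"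
  using update[rule_format, of k] by (cases "\<rho>1 k \<ge> \<eta>1") (auto split: if_splits)

lemma \<Delta>_bounds: "\<Delta> k > 0 \<and> \<Delta> k \<le> Dm"
proof (induction k)
  case 0 then show ?case using \<Delta>0 by (simp add: Dm_def)
next
  case (Suc k)
  have p: "r1 > 0" "r1 < 1" "r2 > 1" "\<Delta>max > 0" using params by auto
  have dm: "\<Delta>max \<le> Dm" by (simp add: Dm_def)
  from \<Delta>_cases[of k] show ?case
  proof (elim disjE)
    assume e: "\<Delta> (Suc k) = r1 * \<Delta> k"
    have "r1 * \<Delta> k \<le> \<Delta> k" using p Suc by (simp add: mult_le_cancel_right1)
    moreover have "r1 * \<Delta> k > 0" using p Suc by simp
    ultimately show ?thesis using e Suc by linarith
  next
    assume e: "\<Delta> (Suc k) = min \<Delta>max (r2 * \<Delta> k)"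
    then show ?thesis using p Suc dm by auto
  qed (use Suc in auto)
qed

lemma \<Delta>_pos: "\<Delta> k > 0" using \<Delta>_bounds by blast
lemma \<Delta>_le: "\<Delta> k \<le> Dm" using \<Delta>_bounds by blast

definition "pred k = mk k 0 - mk k (s k)"

lemma pred_lower: "pred k \<ge> \<gamma>1 / 2 * norm (g (x k)) * min (\<Delta> k) (\<gamma>2 * norm (g (x k)))"
  using s_dec1 by (simp add: pred_def mk_def)

lemma pred_pos: "pred k > 0"
proof -
  have "\<gamma>1 / 2 * norm (g (x k)) * min (\<Delta> k) (\<gamma>2 * norm (g (x k))) > 0"
    using params gk_pos[of k] \<Delta>_pos[of k] by simp
  then show ?thesis using pred_lower[of k] by linarith
qed

lemma s_nz: "s k \<noteq> 0"
  using pred_pos[of k] by (auto simp: pred_def)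

lemma q_eq: "mk k 0 - mk k (-(t *\<^sub>R g (x k))) = t * (norm (g (x k)))^2 - t^2/2 * (g (x k) \<bullet> (B k *v g (x k)))"
proof -
  show ?thesis unfolding mk_diff
    by (simp add: mv_neg matrix_vector_mult_scaleR dot_square_norm power2_eq_square mult.assoc)
qed

lemma cauchy_min: "\<forall>t. 0 \<le> t \<and> t \<le> \<Delta> k / norm (g (x k)) \<longrightarrow>
   t * (norm (g (x k)))^2 - t^2/2 * (g (x k) \<bullet> (B k *v g (x k)))
   \<le> \<alpha>C k * (norm (g (x k)))^2 - (\<alpha>C k)^2/2 * (g (x k) \<bullet> (B k *v g (x k)))"
proof (intro allI impI)
  fix t assume t: "0 \<le> t \<and> t \<le> \<Delta> k / norm (g (x k))"
  then have "mk k (- (\<alpha>C k *\<^sub>R g (x k))) \<le> mk k (- (t *\<^sub>R g (x k)))"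
    using cauchy by (simp add: mk_def)
  then have "mk k 0 - mk k (-(t *\<^sub>R g (x k))) \<le> mk k 0 - mk k (-(\<alpha>C k *\<^sub>R g (x k)))" by simp
  then show "t * (norm (g (x k)))^2 - t^2/2 * (g (x k) \<bullet> (B k *v g (x k)))
   \<le> \<alpha>C k * (norm (g (x k)))^2 - (\<alpha>C k)^2/2 * (g (x k) \<bullet> (B k *v g (x k)))"
    unfolding q_eq .
qed

lemma \<alpha>C_lower: "\<alpha>C k \<ge> min (\<Delta> k / norm (g (x k))) (1 / KB)"
proof (rule quad_min_lower[OF _ KB_pos _ _ _ _ cauchy_min])
  show "0 < (norm (g (x k)))^2" using gk_pos by simp
  show "g (x k) \<bullet> (B k *v g (x k)) \<le> KB * (norm (g (x k)))^2" using quadB[of "g (x k)" k] by linarith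
  show "0 < \<Delta> k / norm (g (x k))" using \<Delta>_pos gk_pos by simp
  show "0 \<le> \<alpha>C k" "\<alpha>C k \<le> \<Delta> k / norm (g (x k))" using cauchy by auto
qed

lemma \<alpha>C_pos: "\<alpha>C k > 0"
proof -
  have "min (\<Delta> k / norm (g (x k))) (1 / KB) > 0" using \<Delta>_pos gk_pos KB_pos by simp
  then show ?thesis using \<alpha>C_lower[of k] by linarith
qed

lemma sC_norm: "norm (sC k) = \<alpha>C k * norm (g (x k))"
  using sC_def \<alpha>C_pos[of k] by simp

lemma sC_le: "norm (sC k) \<le> \<Delta> k"
proof -
  have "\<alpha>C k \<le> \<Delta> k / norm (g (x k))" using cauchy by auto
  then have "\<alpha>C k * norm (g (x k)) \<le> \<Delta> k" using gk_pos by (simp add: pos_le_divide_eq)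
  then show ?thesis using sC_norm by simp
qed

lemma sC_lower: "norm (sC k) \<ge> min (\<Delta> k) (norm (g (x k)) / KB)"
proof -
  have "min (\<Delta> k / norm (g (x k))) (1 / KB) * norm (g (x k)) \<le> \<alpha>C k * norm (g (x k))"
    using \<alpha>C_lower[of k] gk_pos[of k] by (intro mult_right_mono) auto
  moreover have "min (\<Delta> k / norm (g (x k))) (1 / KB) * norm (g (x k)) = min (\<Delta> k) (norm (g (x k)) / KB)"
    using gk_pos[of k] by (simp add: min_mult_distrib_right)
  ultimately show ?thesis using sC_norm by simp
qed

lemma sC_nz: "sC k \<noteq> 0" using sC_norm \<alpha>C_pos[of k] gk_pos[of k] by (metis mult_pos_pos norm_zero less_irrefl)

lemma sgn_sC: "sgn (sC k) = d (x k)"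
proof -
  note gf = gy_facts[OF gk[of k]]
  define a where "a = - (\<alpha>C k * u (x k))"
  have e: "sC k = a *\<^sub>R d (x k)" using sC_def gf(6) by (simp add: a_def)
  have a: "a > 0" using \<alpha>C_pos[of k] gf(3) by (simp add: a_def mult_pos_neg)
  have "sgn (a *\<^sub>R d (x k)) = sgn a *\<^sub>R sgn (d (x k))" by (rule sgn_scaleR)
  also have "\<dots> = d (x k)" using a gf(2) by (simp add: sgn_div_norm)
  finally show ?thesis using e by simp
qed

lemma cauchy_partial:
  assumes "0 \<le> a" "a \<le> norm (sC k)"
  shows "mk k 0 - mk k (a *\<^sub>R d (x k)) \<ge> a * norm (g (x k)) / 2"
proof -
  note gf = gy_facts[OF gk[of k]]
  define t where "t = a / norm (g (x k))"
  have ng: "norm (g (x k)) > 0" by (rule gk_pos)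
  have t: "0 \<le> t" "t \<le> \<alpha>C k" using assms ng sC_norm[of k] by (auto simp: t_def pos_divide_le_eq)
  have e: "a *\<^sub>R d (x k) = -(t *\<^sub>R g (x k))"
    using gf ng by (simp add: t_def)
  have "t * (norm (g (x k)))^2 - t^2/2 * (g (x k) \<bullet> (B k *v g (x k))) \<ge> t * (norm (g (x k)))^2 / 2"
    by (rule quad_partial[OF _ _ _ cauchy_min t]) (use ng cauchy in auto)
  moreover have "t * (norm (g (x k)))^2 / 2 = a * norm (g (x k)) / 2"
    using ng by (simp add: t_def power2_eq_square)
  ultimately show ?thesis unfolding e q_eq by simp
qed


definition "cnd k = (mk k 0 - mk k (safe_step Gs (x k) (s k) *\<^sub>R sgn (s k))
   < safe_step Gs (x k) (s k) / (2 * norm (s k)) * pred k)"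

lemma ssel_cases: "ssel k = (if cnd k then sC k else s k)"
  using ssel_def by (simp add: cnd_def mk_def pred_def)

lemma ssel_nz: "ssel k \<noteq> 0" using ssel_cases[of k] sC_nz s_nz by auto

lemma ssel_le: "norm (ssel k) \<le> \<Delta> k" using ssel_cases[of k] sC_le s_tr by auto

lemma sbar_norm: "norm (sbar k) = 1" using sbar_def ssel_nz[of k] by (simp add: norm_sgn)

lemma Gs_sbar: "Gs (x k) (sgn (ssel k)) > 0"
  using Gs_pos ssel_nz[of k] by (simp add: norm_sgn)

lemma \<alpha>_pos: "\<alpha> k > 0" using safe_step_props(1)[of Gs "x k" "ssel k", OF Gs_sbar[of k] ssel_nz[of k]] \<alpha>_def by simp
lemma \<alpha>_le: "\<alpha> k \<le> norm (ssel k)" using safe_step_props(2)[of Gs "x k" "ssel k", OF Gs_sbar[of k] ssel_nz[of k]] \<alpha>_def by simp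
lemma \<alpha>_lower: "Gs (x k) (sbar k) \<ge> ereal e' \<Longrightarrow> \<alpha> k \<ge> min e' (norm (ssel k))"
  using safe_step_props(3)[of Gs "x k" "ssel k", OF Gs_sbar[of k] ssel_nz[of k]] \<alpha>_def sbar_def by simp
lemma \<alpha>_le_\<Delta>: "\<alpha> k \<le> \<Delta> k" using \<alpha>_le[of k] ssel_le[of k] by linarith

definition "den2 k = mk k 0 - mk k (\<alpha> k *\<^sub>R sbar k)"

lemma cnd_true: "cnd k \<Longrightarrow> ssel k = sC k \<and> sbar k = d (x k)"
  using ssel_cases[of k] sbar_def sgn_sC by simp

lemma cnd_false: "\<not> cnd k \<Longrightarrow> ssel k = s k \<and> sbar k = sgn (s k)"
  using ssel_cases[of k] sbar_def by simp

lemma den2_cauchy: "cnd k \<Longrightarrow> den2 k \<ge> \<alpha> k * norm (g (x k)) / 2"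
  using cnd_true[of k] cauchy_partial[of "\<alpha> k" k] \<alpha>_pos[of k] \<alpha>_le[of k] by (simp add: den2_def)

lemma den2_s: "\<not> cnd k \<Longrightarrow> den2 k \<ge> \<alpha> k / (2 * norm (s k)) * pred k"
  using cnd_false[of k] \<alpha>_def unfolding cnd_def den2_def by simp

lemma den2_pos: "den2 k > 0"
proof (cases "cnd k")
  case True
  then show ?thesis using den2_cauchy[OF True] \<alpha>_pos[of k] gk_pos[of k]
    by (smt (verit, best) divide_pos_pos mult_pos_pos)
next
  case False
  have "\<alpha> k / (2 * norm (s k)) * pred k > 0" using \<alpha>_pos[of k] s_nz[of k] pred_pos[of k] by simp
  then show ?thesis using den2_s[OF False] by linarith
qed

definition "dec k = psi (x k) - psi (xt k)"

lemma \<rho>1_eq: "psi (x k) - psi (x k + s k) = \<rho>1 k * pred k"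
  using \<rho>1_def pred_pos[of k] by (simp add: pred_def mk_def)

lemma \<rho>2_eq: "psi (x k) - psi (x k + \<alpha> k *\<^sub>R sbar k) = \<rho>2 k * den2 k"
  using \<rho>2_def den2_pos[of k] by (simp add: den2_def mk_def)

lemma dec_cases:
  "(\<eta>1 \<le> \<rho>1 k \<and> xt k = x k + s k \<and> dec k = \<rho>1 k * pred k) \<or>
   (\<rho>1 k < \<eta>1 \<and> \<eta> \<le> \<rho>2 k \<and> xt k = x k + \<alpha> k *\<^sub>R sbar k \<and> dec k = \<rho>2 k * den2 k) \<or>
   (\<rho>1 k < \<eta>1 \<and> \<rho>2 k < \<eta> \<and> xt k = x k \<and> dec k = 0)"
proof -
  note U = update[rule_format, of k]
  show ?thesis
  proof (cases "\<eta>1 \<le> \<rho>1 k")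
    case True
    then have "xt k = x k + s k" using U by blast
    then show ?thesis using True \<rho>1_eq[of k] by (simp add: dec_def)
  next
    case False
    then have F: "\<rho>1 k < \<eta>1" by simp
    then have X: "xt k = (if \<rho>2 k \<ge> \<eta> then x k + \<alpha> k *\<^sub>R sbar k else x k)" using U by blast
    show ?thesis
    proof (cases "\<eta> \<le> \<rho>2 k")
      case True
      then show ?thesis using F X \<rho>2_eq[of k] by (simp add: dec_def)
    next
      case False
      then show ?thesis using F X by (simp add: dec_def)
    qed
  qed
qed

lemma dec_nonneg: "dec k \<ge> 0"
proof -
  have p: "\<eta> > 0" "\<eta>1 > 0" using params by auto
  show ?thesis using dec_cases[of k] pred_pos[of k] den2_pos[of k] p
    by (smt (verit) mult_pos_pos)
qed

lemma step_le: "norm (xt k - x k) \<le> \<Delta> k"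
  using dec_cases[of k] s_tr \<alpha>_le_\<Delta>[of k] \<alpha>_pos[of k] sbar_norm[of k] \<Delta>_pos[of k] by auto


sublocale tr: trunc_setup "Gamma_min psi" S m T eps \<delta> \<kappa>
  by (rule trunc_setup.intro) (rule S0 S_nested trunc_i trunc_ii eps_pos eps_le \<kappa>_pos)+

definition "R0 = (SOME R. R > 0 \<and> (\<forall>k. x k \<in> ball 0 R))"

lemma R0: "R0 > 0" "norm (x k) < R0"
  using someI_ex[OF B1] unfolding R0_def by auto

definition "Psum = real m * suminf eps"

lemma Pot_le: "Pot m eps cc \<le> Psum"
  unfolding Psum_def by (rule tr.Pot_bound[OF eps_summable])

lemma Pot_nonneg: "Pot m eps cc \<ge> 0"
  unfolding Pot_def using eps_pos by (intro sum_nonneg) (auto simp: less_imp_le)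

definition "Rb = R0 + Dm + \<kappa> * Psum"

lemma psi_lip_exists: "\<exists>L\<ge>0. \<forall>y\<in>cball 0 Rb. \<forall>z\<in>cball 0 Rb. \<bar>psi y - psi z\<bar> \<le> L * norm (y - z)"
proof -
  obtain L1 where L1: "L1 \<ge> 0" "\<forall>y\<in>cball 0 Rb. \<forall>z\<in>cball 0 Rb. \<bar>phi y - phi z\<bar> \<le> L1 * norm (y - z)"
    using convex_lipschitz_cball[OF phi_convex] by blast
  obtain L2 where L2: "L2 \<ge> 0" "\<forall>y\<in>cball 0 Rb. \<forall>z\<in>cball 0 Rb. \<bar>f y - f z\<bar> \<le> L2 * norm (y - z)"
    using grad_lipschitz_cball[OF f_deriv gradf_cont] by blast
  have "\<bar>psi y - psi z\<bar> \<le> (L1 + L2) * norm (y - z)" if "y \<in> cball 0 Rb" "z \<in> cball 0 Rb" for y z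
  proof -
    have "\<bar>psi y - psi z\<bar> \<le> \<bar>f y - f z\<bar> + \<bar>phi y - phi z\<bar>" using psi_def by simp
    also have "\<dots> \<le> L2 * norm (y - z) + L1 * norm (y - z)" using L1(2) L2(2) that by (intro add_mono) auto
    finally show ?thesis by (simp add: algebra_simps)
  qed
  then show ?thesis using L1 L2 by (intro exI[of _ "L1 + L2"]) auto
qed

definition "Lp = (SOME L. L \<ge> 0 \<and> (\<forall>y\<in>cball 0 Rb. \<forall>z\<in>cball 0 Rb. \<bar>psi y - psi z\<bar> \<le> L * norm (y - z)))"

lemma Lp: "Lp \<ge> 0" "\<forall>y\<in>cball 0 Rb. \<forall>z\<in>cball 0 Rb. \<bar>psi y - psi z\<bar> \<le> Lp * norm (y - z)"
  using someI_ex[OF psi_lip_exists] unfolding Lp_def by auto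

definition "tau k = \<kappa> * (Pot m eps (c (Suc k)) - Pot m eps (c k))"

lemma loopk: "(\<forall>i. c k i \<le> c (Suc k) i) \<and> lev S m (xt k) \<le> lev S m (x (Suc k))
    \<and> (\<forall>i. c (Suc k) i \<noteq> c k i \<longrightarrow> i < lev S m (x (Suc k)))
    \<and> norm (x (Suc k) - xt k) \<le> \<kappa> * (Pot m eps (c (Suc k)) - Pot m eps (c k))
    \<and> Gamma_min psi (x (Suc k)) \<ge> ereal (eps (c (Suc k) (lev S m (x (Suc k)))))"
  by (rule tr.loop_facts[OF trunc_step[rule_format, of k]])

lemma tau_nonneg: "tau k \<ge> 0"
proof -
  have "Pot m eps (c k) \<le> Pot m eps (c (Suc k))" using loopk[of k] by (intro tr.Pot_mono) auto
  then show ?thesis using \<kappa>_pos by (simp add: tau_def)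
qed

lemma trunc_move: "norm (x (Suc k) - xt k) \<le> tau k"
  using loopk[of k] by (simp add: tau_def)

lemma xt_norm: "norm (xt k) \<le> R0 + Dm"
proof -
  have "norm (xt k) \<le> norm (x k) + norm (xt k - x k)" using norm_triangle_sub[of "xt k" "x k"] by simp
  then show ?thesis using R0(2)[of k] step_le[of k] \<Delta>_le[of k] by linarith
qed

lemma psi_trunc: "psi (x (Suc k)) \<le> psi (xt k) + Lp * tau k"
proof -
  have "norm (xt k) + \<kappa> * (Pot m eps (c (Suc k)) - Pot m eps (c k)) \<le> Rb"
  proof -
    have "Pot m eps (c (Suc k)) - Pot m eps (c k) \<le> Psum"
      using Pot_le[of "c (Suc k)"] Pot_nonneg[of "c k"] by linarith
    then have "\<kappa> * (Pot m eps (c (Suc k)) - Pot m eps (c k)) \<le> \<kappa> * Psum"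
      using \<kappa>_pos by (intro mult_left_mono) auto
    then show ?thesis using xt_norm[of k] by (simp add: Rb_def)
  qed
  then show ?thesis
    using tr.loop_fun_bound[OF trunc_step[rule_format, of k] Lp(2) Lp(1)]
    by (simp add: tau_def mult.assoc)
qed

lemma tau_sum: "(\<Sum>k<N. tau k) \<le> \<kappa> * Psum"
proof -
  have "(\<Sum>k<N. tau k) = \<kappa> * (\<Sum>k<N. Pot m eps (c (Suc k)) - Pot m eps (c k))"
    by (simp add: tau_def sum_distrib_left)
  also have "(\<Sum>k<N. Pot m eps (c (Suc k)) - Pot m eps (c k)) = Pot m eps (c N) - Pot m eps (c 0)"
    by (rule sum_lessThan_telescope)
  also have "\<dots> \<le> Psum" using Pot_le[of "c N"] Pot_nonneg[of "c 0"] by linarith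
  finally show ?thesis using \<kappa>_pos by (simp add: mult_left_mono)
qed

lemma tau_summable: "summable tau"
  by (rule summableI_nonneg_bounded[OF tau_nonneg tau_sum])

lemma psi_step: "psi (x (Suc k)) \<le> psi (x k) - dec k + Lp * tau k"
  using psi_trunc[of k] by (simp add: dec_def)

definition "lb = (SOME b. \<forall>y. b \<le> psi y)"

lemma lb: "lb \<le> psi y"
proof -
  have "\<exists>b. \<forall>y. b \<le> psi y" using A1 by (auto simp: bdd_below_def)
  then show ?thesis using someI_ex[of "\<lambda>b. \<forall>y. b \<le> psi y"] unfolding lb_def by simp
qed

lemma dec_sum_aux: "(\<Sum>k<N. dec k) \<le> psi (x 0) - psi (x N) + Lp * (\<Sum>k<N. tau k)"
proof (induction N)
  case 0 then show ?case by simp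
next
  case (Suc N)
  then show ?case using psi_step[of N] by (simp add: distrib_left)
qed

lemma dec_bound: "(\<Sum>k<N. dec k) \<le> psi (x 0) - lb + Lp * (\<kappa> * Psum)"
proof -
  have "(\<Sum>k<N. dec k) \<le> psi (x 0) - psi (x N) + Lp * (\<Sum>k<N. tau k)" by (rule dec_sum_aux)
  moreover have "Lp * (\<Sum>k<N. tau k) \<le> Lp * (\<kappa> * Psum)"
    using Lp(1) tau_sum[of N] by (intro mult_left_mono) auto
  moreover have "lb \<le> psi (x N)" by (rule lb)
  ultimately show ?thesis by linarith
qed

lemma dec_summable: "summable dec"
  by (rule summableI_nonneg_bounded[OF dec_nonneg dec_bound])

lemma dec_lim: "dec \<longlonglongrightarrow> 0"
  by (rule summable_LIMSEQ_zero[OF dec_summable])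



end

locale alg_loc = alg +
  fixes xs and kl0 :: "nat \<Rightarrow> nat"
  assumes kl0_mono: "strict_mono kl0" and kl0_lim: "(\<lambda>l. x (kl0 l)) \<longlonglongrightarrow> xs" and gxs: "g xs \<noteq> 0"
begin

definition "r0 = (SOME r. r > 0 \<and> (\<exists>e>0. \<forall>z\<in>ball xs r. norm (g z) \<ge> e))"
definition "e0 = (SOME e. e > 0 \<and> (\<forall>z\<in>ball xs r0. norm (g z) \<ge> e))"

lemma r0e0: "r0 > 0" "e0 > 0" "\<And>z. z \<in> ball xs r0 \<Longrightarrow> norm (g z) \<ge> e0"
proof -
  have ex: "\<exists>r. r > 0 \<and> (\<exists>e>0. \<forall>z\<in>ball xs r. norm (g z) \<ge> e)" using A2 gxs by blast
  have r: "r0 > 0 \<and> (\<exists>e>0. \<forall>z\<in>ball xs r0. norm (g z) \<ge> e)"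
    unfolding r0_def by (rule someI_ex[OF ex])
  then have ex2: "\<exists>e. e > 0 \<and> (\<forall>z\<in>ball xs r0. norm (g z) \<ge> e)" by blast
  have "e0 > 0 \<and> (\<forall>z\<in>ball xs r0. norm (g z) \<ge> e0)"
    unfolding e0_def by (rule someI_ex[OF ex2])
  then show "r0 > 0" "e0 > 0" "\<And>z. z \<in> ball xs r0 \<Longrightarrow> norm (g z) \<ge> e0" using r by auto
qed

definition "Mf = min 1 (\<gamma>2 * e0 / Dm)"

lemma Dm_pos: "Dm > 0" using \<Delta>0 by (simp add: Dm_def)

lemma Mf: "Mf > 0" "Mf \<le> 1" using params r0e0 Dm_pos by (auto simp: Mf_def)

lemma min_lower:
  assumes "x k \<in> ball xs r0"
  shows "min (\<Delta> k) (\<gamma>2 * norm (g (x k))) \<ge> \<Delta> k * Mf"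
proof (cases "\<Delta> k \<le> \<gamma>2 * norm (g (x k))")
  case True
  then show ?thesis using Mf \<Delta>_pos[of k] by (simp add: mult_left_le)
next
  case False
  have "\<Delta> k * Mf \<le> \<Delta> k * (\<gamma>2 * e0 / Dm)" using \<Delta>_pos[of k] by (intro mult_left_mono) (auto simp: Mf_def)
  also have "\<dots> = (\<Delta> k / Dm) * (\<gamma>2 * e0)" by simp
  also have "\<dots> \<le> 1 * (\<gamma>2 * e0)" using \<Delta>_le[of k] Dm_pos params r0e0
    by (intro mult_right_mono) auto
  also have "\<dots> \<le> \<gamma>2 * norm (g (x k))" using r0e0(3)[OF assms] params by simp
  finally show ?thesis using False by simp
qed

lemma pred_loc:
  assumes "x k \<in> ball xs r0"
  shows "pred k \<ge> \<gamma>1 / 2 * e0 * (\<Delta> k * Mf)"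
proof -
  have "\<gamma>1 / 2 * e0 * (\<Delta> k * Mf) \<le> \<gamma>1 / 2 * norm (g (x k)) * min (\<Delta> k) (\<gamma>2 * norm (g (x k)))"
    using r0e0(3)[OF assms] min_lower[OF assms] params Mf \<Delta>_pos[of k] r0e0(2)
    by (intro mult_mono) auto
  then show ?thesis using pred_lower[of k] by linarith
qed

lemma den2_loc:
  assumes "x k \<in> ball xs r0"
  shows "den2 k \<ge> \<alpha> k * min (e0 / 2) (\<gamma>1 * e0 * Mf / 4)"
proof (cases "cnd k")
  case True
  have "\<alpha> k * min (e0 / 2) (\<gamma>1 * e0 * Mf / 4) \<le> \<alpha> k * (norm (g (x k)) / 2)"
    using \<alpha>_pos[of k] r0e0(3)[OF assms] by (intro mult_left_mono) auto
  then show ?thesis using den2_cauchy[OF True] by simp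
next
  case False
  have ns: "norm (s k) > 0" "norm (s k) \<le> \<Delta> k" using s_nz[of k] s_tr by auto
  have "\<alpha> k / (2 * norm (s k)) * pred k \<ge> \<alpha> k / (2 * norm (s k)) * (\<gamma>1 / 2 * e0 * (\<Delta> k * Mf))"
    using pred_loc[OF assms] \<alpha>_pos[of k] ns by (intro mult_left_mono) auto
  moreover have "\<alpha> k / (2 * norm (s k)) * (\<gamma>1 / 2 * e0 * (\<Delta> k * Mf)) = \<alpha> k * (\<gamma>1 * e0 * Mf / 4) * (\<Delta> k / norm (s k))"
    using ns by (simp add: field_simps)
  moreover have "\<alpha> k * (\<gamma>1 * e0 * Mf / 4) * (\<Delta> k / norm (s k)) \<ge> \<alpha> k * (\<gamma>1 * e0 * Mf / 4) * 1"
    using ns \<alpha>_pos[of k] params r0e0 Mf by (intro mult_left_mono) auto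
  moreover have "\<alpha> k * (\<gamma>1 * e0 * Mf / 4) \<ge> \<alpha> k * min (e0 / 2) (\<gamma>1 * e0 * Mf / 4)"
    using \<alpha>_pos[of k] by (intro mult_left_mono) auto
  ultimately show ?thesis using den2_s[OF False] by linarith
qed

definition "cl = min (\<eta>1 * (\<gamma>1 / 2 * e0 * Mf)) (\<eta> * min (e0 / 2) (\<gamma>1 * e0 * Mf / 4))"

lemma cl_pos: "cl > 0" using params r0e0 Mf by (simp add: cl_def)

lemma loc_step:
  assumes "x k \<in> ball xs r0"
  shows "cl * norm (xt k - x k) \<le> dec k"
proof -
  from dec_cases[of k] show ?thesis
  proof (elim disjE conjE)
    assume a: "\<eta>1 \<le> \<rho>1 k" "xt k = x k + s k" "dec k = \<rho>1 k * pred k"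
    have "cl * norm (xt k - x k) \<le> (\<eta>1 * (\<gamma>1 / 2 * e0 * Mf)) * \<Delta> k"
      using a(2) s_tr[rule_format, of k] cl_pos by (intro mult_mono) (auto simp: cl_def)
    also have "\<dots> = \<eta>1 * (\<gamma>1 / 2 * e0 * (\<Delta> k * Mf))" by simp
    also have "\<dots> \<le> \<eta>1 * pred k" using pred_loc[OF assms] params by (intro mult_left_mono) auto
    also have "\<dots> \<le> \<rho>1 k * pred k" using a(1) pred_pos[of k] by (intro mult_right_mono) auto
    finally show ?thesis using a(3) by simp
  next
    assume a: "\<rho>1 k < \<eta>1" "\<eta> \<le> \<rho>2 k" "xt k = x k + \<alpha> k *\<^sub>R sbar k" "dec k = \<rho>2 k * den2 k"
    have n: "norm (xt k - x k) = \<alpha> k" using a(3) sbar_norm[of k] \<alpha>_pos[of k] by simp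
    have "cl * norm (xt k - x k) \<le> \<eta> * (\<alpha> k * min (e0 / 2) (\<gamma>1 * e0 * Mf / 4))"
      unfolding n using \<alpha>_pos[of k] by (simp add: cl_def mult_right_mono)
    also have "\<dots> \<le> \<eta> * den2 k" using den2_loc[OF assms] params by (intro mult_left_mono) auto
    also have "\<dots> \<le> \<rho>2 k * den2 k" using a(2) den2_pos[of k] by (intro mult_right_mono) auto
    finally show ?thesis using a(4) by simp
  next
    assume a: "\<rho>1 k < \<eta>1" "\<rho>2 k < \<eta>" "xt k = x k" "dec k = 0"
    then show ?thesis by simp
  qed
qed

definition "w k = dec k / cl + tau k"

lemma w_summable: "summable w"
  unfolding w_def by (intro summable_add summable_divide dec_summable tau_summable)

lemma w_nonneg: "w k \<ge> 0" using dec_nonneg[of k] cl_pos tau_nonneg[of k] by (simp add: w_def)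

lemma loc_move:
  assumes "x k \<in> ball xs r0"
  shows "norm (x (Suc k) - x k) \<le> w k"
proof -
  have "norm (x (Suc k) - x k) \<le> norm (x (Suc k) - xt k) + norm (xt k - x k)"
    by (rule norm_diff_triangle_le) auto
  moreover have "norm (xt k - x k) \<le> dec k / cl"
    using loc_step[OF assms] cl_pos by (simp add: pos_le_divide_eq mult.commute)
  ultimately show ?thesis using trunc_move[of k] by (simp add: w_def)
qed

lemma x_lim: "x \<longlonglongrightarrow> xs"
proof (rule LIMSEQ_I)
  fix \<epsilon> :: real assume \<epsilon>: "\<epsilon> > 0"
  define e1 where "e1 = min \<epsilon> r0"
  have e1: "e1 > 0" "e1 \<le> \<epsilon>" "e1 \<le> r0" using \<epsilon> r0e0 by (auto simp: e1_def)
  obtain N1 where N1: "\<forall>n\<ge>N1. norm (\<Sum>i. w (i + n)) < e1 / 2"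
    using suminf_exist_split[OF _ w_summable, of "e1/2"] e1 by auto
  obtain L where L: "\<forall>l\<ge>L. norm (x (kl0 l) - xs) < e1 / 2"
    using LIMSEQ_D[OF kl0_lim, of "e1/2"] e1 by auto
  define K where "K = kl0 (max L N1)"
  have K1: "norm (x K - xs) < e1 / 2" using L by (simp add: K_def)
  have "max L N1 \<le> K" unfolding K_def by (rule seq_suble[OF kl0_mono])
  then have KN: "K \<ge> N1" by simp
  have tail: "(\<Sum>i. w (i + K)) < e1 / 2"
  proof -
    have "norm (\<Sum>i. w (i + K)) < e1 / 2" using N1 KN by blast
    then show ?thesis by simp
  qed
  have psum: "(\<Sum>i<j. w (K + i)) \<le> (\<Sum>i. w (i + K))" for j
    using sum_le_suminf[OF summable_ignore_initial_segment[OF w_summable, of K], of "{..<j}"] w_nonneg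
    by (simp add: add.commute)
  have claim: "norm (x (K + j) - xs) \<le> norm (x K - xs) + (\<Sum>i<j. w (K + i))" for j
  proof (induction j)
    case 0 then show ?case by simp
  next
    case (Suc j)
    have "norm (x (K + j) - xs) < e1" using Suc psum[of j] tail K1 by linarith
    then have "x (K + j) \<in> ball xs r0" using e1 by (simp add: dist_norm norm_minus_commute)
    then have "norm (x (Suc (K + j)) - x (K + j)) \<le> w (K + j)" by (rule loc_move)
    moreover have "norm (x (Suc (K + j)) - xs) \<le> norm (x (Suc (K + j)) - x (K + j)) + norm (x (K + j) - xs)"
      by (rule norm_diff_triangle_le) auto
    ultimately show ?case using Suc by simp
  qed
  show "\<exists>no. \<forall>n\<ge>no. norm (x n - xs) < \<epsilon>"
  proof (intro exI allI impI)
    fix n assume "K \<le> n"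
    then obtain j where j: "n = K + j" by (metis le_add_diff_inverse)
    have "norm (x (K + j) - xs) < e1" using claim[of j] psum[of j] tail K1 by linarith
    then have "norm (x n - xs) < e1" using j by simp
    then show "norm (x n - xs) < \<epsilon>" using e1 by simp
  qed
qed

lemma ev_ball: "\<forall>\<^sub>F k in sequentially. x k \<in> ball xs r0"
proof -
  have "\<forall>\<^sub>F k in sequentially. dist (x k) xs < r0" using x_lim r0e0(1) by (rule tendstoD)
  then show ?thesis by (simp add: dist_commute)
qed


lemma Rb_ge: "norm (x k) < Rb"
proof -
  have "0 \<le> \<kappa> * Psum" using \<kappa>_pos Pot_le[of "\<lambda>_. 0"] Pot_nonneg[of "\<lambda>_. 0"] by simp
  then show ?thesis using R0(2)[of k] Dm_pos by (simp add: Rb_def)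
qed

lemma dd_psi: "((\<lambda>t. (psi (y + t *\<^sub>R v) - psi y) / t) \<longlongrightarrow> dir_deriv psi y v) (at_right 0)"
  using dd_tendsto[OF f_deriv[rule_format, of y] phi_convex, of v] by (simp add: psi_def)

lemma dd_lip_k:
  assumes "norm v \<le> 1" "norm v' \<le> 1"
  shows "\<bar>dir_deriv psi (x k) v - dir_deriv psi (x k) v'\<bar> \<le> Lp * norm (v - v')"
  by (rule dd_lipschitz[OF dd_psi dd_psi Lp(2) Rb_ge assms])

lemma ell_facts: "0 \<le> ell (norm (s k))" "ell (norm (s k)) \<le> 1/2"
  using ell_range s_nz[of k] by auto

lemma d_norm: "norm (d (x k)) = 1" using gy_facts(2)[OF gk] .

lemma angle:
  assumes xb: "x k \<in> ball xs r0"
  shows "(norm (sbar k - d (x k)))^2 \<le> 2 * ell (norm (s k)) + 2 * (norm (s k) * KB / e0)"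
proof (cases "cnd k")
  case True
  have "0 \<le> 2 * (norm (s k) * KB / e0)" using KB_pos r0e0 by simp
  then show ?thesis using cnd_true[OF True] ell_facts[of k] by simp
next
  case False
  note gf = gy_facts[OF gk[of k]]
  define ns where "ns = norm (s k)"
  define ng where "ng = norm (g (x k))"
  define l where "l = ell ns"
  have ns: "ns > 0" "ns \<le> \<Delta> k" using s_nz[of k] s_tr by (auto simp: ns_def)
  have ng: "ng \<ge> e0" "ng > 0" using r0e0(3)[OF xb] gk_pos[of k] by (auto simp: ng_def)
  have l: "0 \<le> l" "l \<le> 1/2" using ell_facts[of k] by (auto simp: l_def ns_def)
  have P: "pred k = - (g (x k) \<bullet> s k) - 1/2 * (s k \<bullet> (B k *v s k))" by (simp add: pred_def mk_diff)
  have Qs: "\<bar>s k \<bullet> (B k *v s k)\<bar> \<le> ns^2 * KB" using quadB[of "s k" k] by (simp add: ns_def mult.commute)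
  define gBg where "gBg = g (x k) \<bullet> (B k *v g (x k))"
  have gBg: "gBg \<le> KB * ng^2" using quadB[of "g (x k)" k] by (simp add: gBg_def ng_def)
  have C: "mk k 0 - mk k (sC k) \<ge> ns * ng - ns^2 * KB / 2"
  proof -
    define t where "t = ns / ng"
    have t: "0 \<le> t" "t \<le> \<Delta> k / ng" using ns ng by (auto simp: t_def divide_right_mono)
    have "mk k 0 - mk k (sC k) = \<alpha>C k * ng^2 - (\<alpha>C k)^2/2 * gBg"
      using q_eq[of k "\<alpha>C k"] sC_def by (simp add: ng_def gBg_def)
    also have "\<dots> \<ge> t * ng^2 - t^2/2 * gBg" using cauchy_min[of k] t by (simp add: ng_def gBg_def)
    finally have a: "mk k 0 - mk k (sC k) \<ge> t * ng^2 - t^2/2 * gBg" .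
    have "t^2/2 * gBg \<le> t^2/2 * (KB * ng^2)" using gBg by (intro mult_left_mono) auto
    also have "t^2/2 * (KB * ng^2) = ns^2 * KB / 2" using ng by (simp add: t_def power2_eq_square field_simps)
    finally have b: "t^2/2 * gBg \<le> ns^2 * KB / 2" .
    have c: "t * ng^2 = ns * ng" using ng by (simp add: t_def power2_eq_square)
    show ?thesis using a b c by linarith
  qed
  have D2: "pred k \<ge> (1 - l) * (mk k 0 - mk k (sC k))"
    using s_dec2[rule_format, of k] by (simp add: pred_def mk_def l_def ns_def)
  have e1: "(1 - l) * (mk k 0 - mk k (sC k)) \<ge> (1 - l) * (ns * ng - ns^2 * KB / 2)"
    using C l by (intro mult_left_mono) auto
  have e2: "(1 - l) * (ns * ng - ns^2 * KB / 2) = (1 - l) * ns * ng - (1 - l) * (ns^2 * KB / 2)"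
    by (simp add: algebra_simps)
  have e3: "(1 - l) * (ns^2 * KB / 2) \<le> ns^2 * KB / 2"
    using l KB_pos by (intro mult_left_le_one_le) auto
  have A: "- (g (x k) \<bullet> s k) \<ge> (1 - l) * ns * ng - ns^2 * KB"
    using P Qs D2 e1 e2 e3 by linarith
  have gs: "- (g (x k) \<bullet> s k) = ng * (d (x k) \<bullet> s k)"
    using gf(6) gf(4) by (simp add: ng_def)
  have ds: "d (x k) \<bullet> s k \<ge> (1 - l) * ns - ns^2 * KB / ng"
  proof -
    have "ng * (d (x k) \<bullet> s k) \<ge> ng * ((1 - l) * ns - ns^2 * KB / ng)"
      using A gs ng by (simp add: algebra_simps)
    then show ?thesis using ng by simp
  qed
  have "ns^2 * KB / ng \<le> ns^2 * KB / e0" using ng r0e0(2) KB_pos by (intro divide_left_mono) auto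
  then have ds2: "d (x k) \<bullet> s k \<ge> (1 - l) * ns - ns^2 * KB / e0" using ds by linarith
  have sb: "sbar k = (1 / ns) *\<^sub>R s k" using cnd_false[OF False] by (simp add: ns_def sgn_div_norm divide_inverse_commute)
  have dsb: "d (x k) \<bullet> sbar k = (d (x k) \<bullet> s k) / ns" using sb by simp
  have "(d (x k) \<bullet> s k) / ns \<ge> ((1 - l) * ns - ns^2 * KB / e0) / ns"
    using ds2 ns by (intro divide_right_mono) auto
  also have "((1 - l) * ns - ns^2 * KB / e0) / ns = (1 - l) - ns * KB / e0"
    using ns by (simp add: power2_eq_square field_simps)
  finally have dsb2: "d (x k) \<bullet> sbar k \<ge> 1 - l - ns * KB / e0" using dsb by simp
  have "(norm (sbar k - d (x k)))^2 = (norm (sbar k))^2 - 2 * (d (x k) \<bullet> sbar k) + (norm (d (x k)))^2"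
    by (simp add: power2_norm_eq_inner inner_diff_left inner_diff_right inner_commute)
  also have "\<dots> = 2 - 2 * (d (x k) \<bullet> sbar k)" using sbar_norm[of k] d_norm[of k] by simp
  finally show ?thesis using dsb2 by (simp add: l_def ns_def)
qed

definition "err k = psi (x k + \<alpha> k *\<^sub>R sbar k) - psi (x k) - \<alpha> k * dir_deriv psi (x k) (sbar k)"

lemma rho2_fail:
  assumes xb: "x k \<in> ball xs r0" and r2: "\<rho>2 k < \<eta>1"
  shows "(1 - \<eta>1) * e0 < Lp * norm (sbar k - d (x k)) + \<bar>err k\<bar> / \<alpha> k + \<alpha> k * KB"
proof -
  note gf = gy_facts[OF gk[of k]]
  define a where "a = \<alpha> k"
  define ng where "ng = norm (g (x k))"
  define z where "z = norm (sbar k - d (x k))"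
  have a: "a > 0" using \<alpha>_pos by (simp add: a_def)
  have ng: "ng \<ge> e0" "ng > 0" using r0e0(3)[OF xb] gk_pos[of k] by (auto simp: ng_def)
  have p: "\<eta>1 < 1" "\<eta>1 > 0" using params by auto
  have ddl: "dir_deriv psi (x k) (sbar k) \<le> dir_deriv psi (x k) (d (x k)) + Lp * z"
    using dd_lip_k[of "sbar k" "d (x k)" k] sbar_norm[of k] d_norm[of k] by (simp add: z_def)
  have ddd: "dir_deriv psi (x k) (d (x k)) \<le> - ng" using gf(5) gf(4) by (simp add: ng_def)
  have N: "\<rho>2 k * den2 k = - (a * dir_deriv psi (x k) (sbar k)) - err k"
    using \<rho>2_eq[of k] by (simp add: err_def a_def)
  have "a * dir_deriv psi (x k) (sbar k) \<le> a * (- ng + Lp * z)"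
    using ddl ddd a by (intro mult_left_mono) auto
  then have N2: "\<rho>2 k * den2 k \<ge> a * ng - a * Lp * z - \<bar>err k\<bar>"
    using N by (simp add: algebra_simps)
  have dsb: "d (x k) \<bullet> sbar k \<le> 1"
    using Cauchy_Schwarz_ineq2[of "d (x k)" "sbar k"] sbar_norm[of k] d_norm[of k] by simp
  have gs: "- (g (x k) \<bullet> (a *\<^sub>R sbar k)) = a * (ng * (d (x k) \<bullet> sbar k))"
    using gf(6) gf(4) by (simp add: ng_def)
  have "a * (ng * (d (x k) \<bullet> sbar k)) \<le> a * (ng * 1)"
    using a ng dsb by (intro mult_left_mono) auto
  then have gs2: "- (g (x k) \<bullet> (a *\<^sub>R sbar k)) \<le> a * ng" using gs by simp
  have Qa: "\<bar>(a *\<^sub>R sbar k) \<bullet> (B k *v (a *\<^sub>R sbar k))\<bar> \<le> KB * a^2"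
    using quadB[of "a *\<^sub>R sbar k" k] sbar_norm[of k] a by simp
  have Dn: "den2 k \<le> a * ng + KB * a^2 / 2"
    using gs2 Qa by (simp add: den2_def mk_diff a_def[symmetric])
  have "\<rho>2 k * den2 k < \<eta>1 * den2 k" using r2 den2_pos[of k] by (intro mult_strict_right_mono)
  also have "\<dots> \<le> \<eta>1 * (a * ng + KB * a^2 / 2)" using Dn p by (intro mult_left_mono) auto
  finally have "a * ng - a * Lp * z - \<bar>err k\<bar> < \<eta>1 * (a * ng + KB * a^2 / 2)" using N2 by linarith
  moreover have "\<eta>1 * (KB * a^2 / 2) \<le> KB * a^2"
  proof -
    have "\<eta>1 * (KB * a^2 / 2) \<le> 1 * (KB * a^2 / 2)" using p KB_pos by (intro mult_right_mono) auto
    moreover have "KB * a^2 \<ge> 0" using KB_pos by simp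
    ultimately show ?thesis by linarith
  qed
  ultimately have i: "a * ng - \<eta>1 * (a * ng) < a * Lp * z + \<bar>err k\<bar> + KB * a^2"
    by (simp add: distrib_left)
  have e1: "a * ((1 - \<eta>1) * ng) = a * ng - \<eta>1 * (a * ng)" by (simp add: algebra_simps)
  have e2: "a * (Lp * z + \<bar>err k\<bar> / a + a * KB) = a * Lp * z + \<bar>err k\<bar> + KB * a^2"
    using a by (simp add: distrib_left power2_eq_square mult_ac)
  have "a * ((1 - \<eta>1) * ng) < a * (Lp * z + \<bar>err k\<bar> / a + a * KB)"
    using i e1 e2 by linarith
  then have "(1 - \<eta>1) * ng < Lp * z + \<bar>err k\<bar> / a + a * KB" using a by simp
  moreover have "(1 - \<eta>1) * e0 \<le> (1 - \<eta>1) * ng" using ng p by (intro mult_left_mono) auto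
  ultimately show ?thesis by (simp add: a_def z_def)
qed


lemma q_pos: "(1 - \<eta>1) * e0 > 0" using params r0e0 by simp

lemma Delta_hat: "\<exists>h>0. \<exists>K. \<forall>k\<ge>K. \<Delta> k \<le> h \<longrightarrow> \<not> (\<rho>1 k < \<eta>1 \<and> \<rho>2 k < \<eta>1)"
proof (rule ccontr)
  assume "\<not> ?thesis"
  then have H: "\<forall>h>0. \<forall>K. \<exists>k\<ge>K. \<Delta> k \<le> h \<and> \<rho>1 k < \<eta>1 \<and> \<rho>2 k < \<eta>1" by blast
  obtain Kb where Kb: "\<forall>k\<ge>Kb. x k \<in> ball xs r0" using ev_ball by (auto simp: eventually_sequentially)
  define P where "P n k \<longleftrightarrow> \<Delta> k \<le> 1 / (real n + 1) \<and> \<rho>2 k < \<eta>1 \<and> x k \<in> ball xs r0" for n k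
  have ex: "\<exists>k. k \<ge> K \<and> P n k" for n K
  proof -
    obtain k where "k \<ge> max K Kb" "\<Delta> k \<le> 1 / (real n + 1)" "\<rho>2 k < \<eta>1"
      using H[rule_format, of "1 / (real n + 1)" "max K Kb"] by auto
    then show ?thesis using Kb by (auto simp: P_def)
  qed
  define pick where "pick n K = (SOME k. k \<ge> K \<and> P n k)" for n K
  have pick: "pick n K \<ge> K \<and> P n (pick n K)" for n K
    unfolding pick_def by (rule someI_ex[OF ex])
  define kl where "kl = rec_nat (pick 0 Kb) (\<lambda>l k. pick (Suc l) (Suc k))"
  have kl0: "kl 0 = pick 0 Kb" and klS: "kl (Suc l) = pick (Suc l) (Suc (kl l))" for l
    by (simp_all add: kl_def)
  have Pkl: "P l (kl l)" for l
    by (cases l) (use pick kl0 klS in auto)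
  have mono: "strict_mono kl"
    unfolding strict_mono_Suc_iff using pick klS by (metis Suc_le_lessD)
  have Dk: "\<Delta> (kl l) \<le> 1 / (real l + 1)" "\<rho>2 (kl l) < \<eta>1" "x (kl l) \<in> ball xs r0" for l
    using Pkl[of l] by (auto simp: P_def)
  have lim1: "(\<lambda>l. 1 / (real l + 1)) \<longlonglongrightarrow> 0"
    using LIMSEQ_inverse_real_of_nat by (simp add: divide_inverse add.commute)
  have Dlim: "(\<lambda>l. \<Delta> (kl l)) \<longlonglongrightarrow> 0"
    by (rule tendsto_sandwich[OF _ _ tendsto_const lim1]; rule always_eventually; use Dk \<Delta>_pos in \<open>auto intro: less_imp_le\<close>)
  have alim: "(\<lambda>l. \<alpha> (kl l)) \<longlonglongrightarrow> 0"
    by (rule tendsto_sandwich[OF _ _ tendsto_const Dlim]; rule always_eventually; use \<alpha>_pos \<alpha>_le_\<Delta> in \<open>auto intro: less_imp_le\<close>)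
  have slim: "(\<lambda>l. norm (s (kl l))) \<longlonglongrightarrow> 0"
    by (rule tendsto_sandwich[OF _ _ tendsto_const Dlim]; rule always_eventually; use s_tr in auto)
  have sfl: "filterlim (\<lambda>l. norm (s (kl l))) (at_right 0) sequentially"
    by (rule tendsto_imp_filterlim_at_right[OF slim]) (use s_nz in auto)
  have elim: "(\<lambda>l. ell (norm (s (kl l)))) \<longlonglongrightarrow> 0"
    by (rule filterlim_compose[OF ell_lim sfl])
  have zb: "(\<lambda>l. 2 * ell (norm (s (kl l))) + 2 * (norm (s (kl l)) * KB / e0)) \<longlonglongrightarrow> 0"
  proof -
    have "(\<lambda>l. 2 * ell (norm (s (kl l))) + 2 * (norm (s (kl l)) * KB / e0)) \<longlonglongrightarrow> 2 * 0 + 2 * (0 * KB / e0)"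
      by (intro tendsto_add tendsto_mult_left tendsto_divide tendsto_mult elim slim tendsto_const) (use r0e0 in auto)
    then show ?thesis by simp
  qed
  have zlim: "(\<lambda>l. norm (sbar (kl l) - d (x (kl l)))) \<longlonglongrightarrow> 0"
  proof (rule tendsto_sandwich[OF _ _ tendsto_const])
    show "(\<lambda>l. sqrt (2 * ell (norm (s (kl l))) + 2 * (norm (s (kl l)) * KB / e0))) \<longlonglongrightarrow> 0"
      using tendsto_real_sqrt[OF zb] by simp
    show "\<forall>\<^sub>F l in sequentially. 0 \<le> norm (sbar (kl l) - d (x (kl l)))" by simp
    show "\<forall>\<^sub>F l in sequentially. norm (sbar (kl l) - d (x (kl l))) \<le> sqrt (2 * ell (norm (s (kl l))) + 2 * (norm (s (kl l)) * KB / e0))"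
      by (rule always_eventually, rule allI, rule real_le_rsqrt, rule angle, rule Dk(3))
  qed
  have conv: "convergent (\<lambda>l. x (kl l))"
    using LIMSEQ_subseq_LIMSEQ[OF x_lim mono] by (auto simp: convergent_def o_def)
  have so: "(\<lambda>l. err (kl l)) \<in> o[sequentially](\<lambda>l. \<alpha> (kl l))"
    using B3[rule_format, of kl] mono conv alim by (simp add: err_def)
  define q where "q = (1 - \<eta>1) * e0"
  have q: "q > 0" using q_pos by (simp add: q_def)
  have ev1: "\<forall>\<^sub>F l in sequentially. norm (err (kl l)) \<le> q/4 * norm (\<alpha> (kl l))"
    using landau_o.smallD[OF so, of "q/4"] q by simp
  have ev2: "\<forall>\<^sub>F l in sequentially. Lp * norm (sbar (kl l) - d (x (kl l))) < q/4"
  proof -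
    have "Lp * 0 < q/4" using q by simp
    from order_tendstoD(2)[OF tendsto_mult_left[OF zlim] this] show ?thesis .
  qed
  have ev3: "\<forall>\<^sub>F l in sequentially. \<alpha> (kl l) * KB < q/4"
  proof -
    have "0 * KB < q/4" using q by simp
    from order_tendstoD(2)[OF tendsto_mult_right[OF alim] this] show ?thesis .
  qed
  have "\<forall>\<^sub>F l in sequentially. False"
    using ev1 ev2 ev3
  proof eventually_elim
    case (elim l)
    have a: "\<alpha> (kl l) > 0" by (rule \<alpha>_pos)
    have "\<bar>err (kl l)\<bar> / \<alpha> (kl l) \<le> q/4" using elim(1) a by (simp add: pos_divide_le_eq)
    moreover have "q < Lp * norm (sbar (kl l) - d (x (kl l))) + \<bar>err (kl l)\<bar> / \<alpha> (kl l) + \<alpha> (kl l) * KB"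
      using rho2_fail[OF Dk(3) Dk(2)] by (simp add: q_def)
    ultimately show False using elim(2,3) q by linarith
  qed
  then show False by simp
qed

lemma Delta_grow:
  assumes "\<Delta> k \<le> \<Delta>max" "\<not> (\<rho>1 k < \<eta>1 \<and> \<rho>2 k < \<eta>1)"
  shows "\<Delta> (Suc k) \<ge> \<Delta> k"
proof -
  have r2: "r2 * \<Delta> k \<ge> \<Delta> k" using params \<Delta>_pos[of k] by (simp add: mult_le_cancel_right1)
  have m: "min \<Delta>max (r2 * \<Delta> k) \<ge> \<Delta> k" using r2 assms(1) by simp
  note U = update[rule_format, of k]
  show ?thesis
  proof (cases "\<eta>1 \<le> \<rho>1 k")
    case True
    then have "\<Delta> (Suc k) = (if \<rho>1 k > \<eta>2 then min \<Delta>max (r2 * \<Delta> k) else \<Delta> k)" using U by blast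
    then show ?thesis using m by simp
  next
    case False
    then have F: "\<rho>1 k < \<eta>1" by simp
    then have r: "\<rho>2 k \<ge> \<eta>1" using assms(2) by simp
    have "\<Delta> (Suc k) = (if \<rho>2 k < \<eta>1 then r1 * \<Delta> k
                          else if \<rho>2 k > \<eta>2 then min \<Delta>max (r2 * \<Delta> k) else \<Delta> k)" using U F by blast
    then show ?thesis using m r by simp
  qed
qed

lemma Delta_low: "\<exists>Dl>0. \<exists>K. \<forall>k\<ge>K. \<Delta> k \<ge> Dl"
proof -
  obtain h K where h: "h > 0" and hK: "\<forall>k\<ge>K. \<Delta> k \<le> h \<longrightarrow> \<not> (\<rho>1 k < \<eta>1 \<and> \<rho>2 k < \<eta>1)"
    using Delta_hat by blast
  define h' where "h' = min h \<Delta>max"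
  have h': "h' > 0" "h' \<le> h" "h' \<le> \<Delta>max" using h params by (auto simp: h'_def)
  define Dl where "Dl = min (\<Delta> K) (r1 * h')"
  have Dl: "Dl > 0" using \<Delta>_pos[of K] params h' by (simp add: Dl_def)
  have "\<Delta> (K + j) \<ge> Dl" for j
  proof (induction j)
    case 0 then show ?case by (simp add: Dl_def)
  next
    case (Suc j)
    let ?k = "K + j"
    show ?case
    proof (cases "\<Delta> ?k \<le> h'")
      case True
      then have "\<Delta> (Suc ?k) \<ge> \<Delta> ?k" using hK h' by (intro Delta_grow) auto
      then show ?thesis using Suc by simp
    next
      case False
      have p: "r1 > 0" "r1 < 1" "r2 > 1" using params by auto
      have a: "r1 * h' \<le> r1 * \<Delta> ?k" using False p by (intro mult_left_mono) auto
      have b: "r1 * h' \<le> 1 * h'" using p h' by (intro mult_right_mono) auto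
      have "1 * \<Delta> ?k \<le> r2 * \<Delta> ?k" using p \<Delta>_pos[of ?k] by (intro mult_right_mono) auto
      then have c: "h' \<le> r2 * \<Delta> ?k" using False by simp
      have "\<Delta> (Suc ?k) \<ge> r1 * h'"
      proof -
        from \<Delta>_cases[of ?k] consider (c1) "\<Delta> (Suc ?k) = r1 * \<Delta> ?k" | (c2) "\<Delta> (Suc ?k) = min \<Delta>max (r2 * \<Delta> ?k)"
          | (c3) "\<Delta> (Suc ?k) = \<Delta> ?k" by blast
        then show ?thesis
        proof cases
          case c1 then show ?thesis using a by linarith
        next
          case c2
          have "min \<Delta>max (r2 * \<Delta> ?k) \<ge> h'" using c h'(3) by simp
          then show ?thesis using c2 b by linarith
        next
          case c3 then show ?thesis using False b by linarith
        qed
      qed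
      then show ?thesis by (simp add: Dl_def)
    qed
  qed
  then have "\<forall>k\<ge>K. \<Delta> k \<ge> Dl" by (metis le_add_diff_inverse)
  then show ?thesis using Dl by blast
qed


definition "succ k \<longleftrightarrow> \<not> (\<rho>1 k < \<eta>1 \<and> \<rho>2 k < \<eta>)"

lemma fail_xt: "\<not> succ k \<Longrightarrow> xt k = x k"
  using dec_cases[of k] by (auto simp: succ_def)

lemma fail_Delta: "\<not> succ k \<Longrightarrow> \<Delta> (Suc k) = r1 * \<Delta> k"
proof -
  assume "\<not> succ k"
  then have a: "\<rho>1 k < \<eta>1" "\<rho>2 k < \<eta>" by (auto simp: succ_def)
  then have "\<rho>2 k < \<eta>1" using params by simp
  then show ?thesis using update[rule_format, of k] a by auto
qed

lemma succ_often: "\<exists>k\<ge>K. succ k"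
proof (rule ccontr)
  assume "\<not> (\<exists>k\<ge>K. succ k)"
  then have F: "\<forall>k\<ge>K. \<not> succ k" by blast
  obtain Dl K1 where Dl: "Dl > 0" "\<forall>k\<ge>K1. \<Delta> k \<ge> Dl" using Delta_low by blast
  have pw: "\<Delta> (K + n) = r1 ^ n * \<Delta> K" for n
  proof (induction n)
    case 0 then show ?case by simp
  next
    case (Suc n) then show ?case using fail_Delta[of "K + n"] F by simp
  qed
  have "(\<lambda>n. r1 ^ n * \<Delta> K) \<longlonglongrightarrow> 0 * \<Delta> K"
    using params by (intro tendsto_mult LIMSEQ_power_zero tendsto_const) auto
  then have "\<forall>\<^sub>F n in sequentially. r1 ^ n * \<Delta> K < Dl" using Dl(1) by (simp add: order_tendstoD(2))
  then obtain n0 where n0: "\<forall>n\<ge>n0. r1 ^ n * \<Delta> K < Dl" by (auto simp: eventually_sequentially)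
  have "\<Delta> (K + (n0 + K1)) < Dl" using n0 pw by auto
  moreover have "\<Delta> (K + (n0 + K1)) \<ge> Dl" using Dl(2) by simp
  ultimately show False by simp
qed

lemma stop_prop: "Gamma_min psi (x (Suc k)) \<ge> ereal (eps (c (Suc k) (lev S m (x (Suc k)))))"
  using loopk[of k] by blast

lemma fail_keep:
  assumes "\<not> succ (Suc k)"
  shows "x (Suc (Suc k)) = x (Suc k) \<and> c (Suc (Suc k)) = c (Suc k)"
proof -
  have "xt (Suc k) = x (Suc k)" using fail_xt[OF assms] .
  then have "trunc_loop (Gamma_min psi) S m T eps (c (Suc k)) (x (Suc k)) (c (Suc (Suc k))) (x (Suc (Suc k)))"
    using trunc_step[rule_format, of "Suc k"] by simp
  from tr.loop_stop_det[OF this stop_prop[of k]] show ?thesis by simp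
qed

lemma c_mono: "k \<le> k' \<Longrightarrow> c k i \<le> c k' i"
proof (induction k' rule: dec_induct)
  case base then show ?case by simp
next
  case (step n) then show ?case using loopk[of n] by (meson order_trans)
qed

lemma lev_le: "lev S m y \<le> m" by (rule tr.lev_props(1))

lemma counters: "\<exists>N. \<forall>K. \<exists>k\<ge>K. c (Suc k) (lev S m (x (Suc k))) \<le> N"
proof (cases "\<forall>i\<le>m. \<exists>b. \<forall>k. c k i \<le> b")
  case True
  then obtain Bf where Bf: "\<forall>i\<le>m. \<forall>k. c k i \<le> Bf i" by metis
  define N where "N = (\<Sum>i\<le>m. Bf i)"
  have "c k i \<le> N" if "i \<le> m" for k i
  proof -
    have "Bf i \<le> N" unfolding N_def using that by (intro member_le_sum) auto
    then show ?thesis using Bf that by (meson order_trans)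
  qed
  then show ?thesis using lev_le by blast
next
  case False
  define J where "J = {i. i \<le> m \<and> \<not> (\<exists>b. \<forall>k. c k i \<le> b)}"
  have J: "finite J" "J \<noteq> {}" using False by (auto simp: J_def)
  define j where "j = Max J"
  have jJ: "j \<in> J" using J by (simp add: j_def)
  have above: "\<exists>b. \<forall>k. c k i \<le> b" if "j < i" "i \<le> m" for i
  proof (rule ccontr)
    assume "\<not> ?thesis"
    then have "i \<in> J" using that by (auto simp: J_def)
    then have "i \<le> j" using J by (simp add: j_def)
    then show False using that by simp
  qed
  then obtain Bf where Bf: "\<forall>i. j < i \<and> i \<le> m \<longrightarrow> (\<forall>k. c k i \<le> Bf i)" by metis
  define N where "N = (\<Sum>i\<le>m. Bf i)"
  have cN: "c k i \<le> N" if "j < i" "i \<le> m" for k i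
  proof -
    have "Bf i \<le> N" unfolding N_def using that by (intro member_le_sum) auto
    then show ?thesis using Bf that by (meson order_trans)
  qed
  have unb: "\<exists>k\<ge>K. c (Suc k) j \<noteq> c k j" for K
  proof (rule ccontr)
    assume "\<not> ?thesis"
    then have const: "\<forall>k\<ge>K. c (Suc k) j = c k j" by auto
    have "c k j \<le> c K j" for k
    proof (cases "k \<le> K")
      case True then show ?thesis by (rule c_mono)
    next
      case False
      have "c (K + n) j = c K j" for n
        by (induction n) (use const in auto)
      then show ?thesis using False by (metis le_add_diff_inverse nat_le_linear order_refl)
    qed
    then show False using jJ by (auto simp: J_def)
  qed
  have "\<exists>k\<ge>K. c (Suc k) (lev S m (x (Suc k))) \<le> N" for K
  proof -
    obtain k where k: "k \<ge> K" "c (Suc k) j \<noteq> c k j" using unb by blast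
    then have "j < lev S m (x (Suc k))" using loopk[of k] by metis
    then show ?thesis using k cN lev_le by blast
  qed
  then show ?thesis by blast
qed

lemma eps_anti: "a \<le> b \<Longrightarrow> eps b \<le> eps a"
proof (induction b rule: dec_induct)
  case base then show ?case by simp
next
  case (step n) then show ?case using eps_decr[rule_format, of n] by simp
qed

lemma good_succ: "\<exists>N. \<forall>K. \<exists>k\<ge>K. succ k \<and> Gamma_min psi (x k) \<ge> ereal (eps N)"
proof -
  obtain N where N: "\<forall>K. \<exists>k\<ge>K. c (Suc k) (lev S m (x (Suc k))) \<le> N" using counters by blast
  have "\<exists>k'\<ge>K. succ k' \<and> Gamma_min psi (x k') \<ge> ereal (eps N)" for K
  proof -
    obtain k where k: "k \<ge> K" "c (Suc k) (lev S m (x (Suc k))) \<le> N" using N by blast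
    have G0: "Gamma_min psi (x (Suc k)) \<ge> ereal (eps N)"
      using stop_prop[of k] eps_anti[OF k(2)] by (meson ereal_less_eq(3) order_trans)
    have ex: "\<exists>j. j \<ge> Suc k \<and> succ j" using succ_often by blast
    define k' where "k' = (LEAST j. j \<ge> Suc k \<and> succ j)"
    have k': "k' \<ge> Suc k" "succ k'" using LeastI_ex[OF ex] by (auto simp: k'_def)
    have before: "\<not> succ j" if "Suc k \<le> j" "j < k'" for j
      using not_less_Least[of j "\<lambda>j. j \<ge> Suc k \<and> succ j"] that by (auto simp: k'_def)
    have keep: "Suc k + i \<le> k' \<longrightarrow> x (Suc k + i) = x (Suc k)" for i
    proof (induction i)
      case 0 then show ?case by simp
    next
      case (Suc i)
      show ?case
      proof
        assume a: "Suc k + Suc i \<le> k'"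
        have "\<not> succ (Suc (k + i))" using before[of "Suc (k + i)"] a by simp
        then have "x (Suc (Suc (k + i))) = x (Suc (k + i))" using fail_keep by blast
        then show "x (Suc k + Suc i) = x (Suc k)" using Suc a by simp
      qed
    qed
    have "x k' = x (Suc k)" using keep[of "k' - Suc k"] k'(1) by simp
    then show ?thesis using k' k(1) G0 by (intro exI[of _ k']) auto
  qed
  then show ?thesis by blast
qed

lemma contradiction: False
proof -
  obtain N where N: "\<forall>K. \<exists>k\<ge>K. succ k \<and> Gamma_min psi (x k) \<ge> ereal (eps N)" using good_succ by blast
  have eN: "eps N > 0" using eps_pos by simp
  obtain e' where e': "e' > 0" "\<forall>k. Gamma_min psi (x k) \<ge> ereal (eps N) \<longrightarrow> Gs (x k) (sbar k) \<ge> ereal e'"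
    using B4[rule_format, OF eN] by blast
  obtain Dl K1 where Dl: "Dl > 0" "\<forall>k\<ge>K1. \<Delta> k \<ge> Dl" using Delta_low by blast
  obtain Kb where Kb: "\<forall>k\<ge>Kb. x k \<in> ball xs r0" using ev_ball by (auto simp: eventually_sequentially)
  define PL where "PL = \<gamma>1 / 2 * e0 * (Dl * Mf)"
  have PL: "PL > 0" using params r0e0 Dl Mf by (simp add: PL_def)
  define cS where "cS = min (\<eta>1 * PL) (\<eta> * min (min e' (min Dl (e0 / KB)) * e0 / 2) (min (e' / Dm) 1 / 2 * PL))"
  have cS: "cS > 0" using params PL e' Dl r0e0 KB_pos Dm_pos by (simp add: cS_def)
  have big: "dec k \<ge> cS" if k: "k \<ge> K1" "k \<ge> Kb" "succ k" "Gamma_min psi (x k) \<ge> ereal (eps N)" for k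
  proof -
    have xb: "x k \<in> ball xs r0" using Kb k by simp
    have Dk: "\<Delta> k \<ge> Dl" using Dl k by simp
    have PLk: "pred k \<ge> PL"
    proof -
      have "PL \<le> \<gamma>1 / 2 * e0 * (\<Delta> k * Mf)" unfolding PL_def
        using Dk params r0e0 Mf by (intro mult_left_mono mult_right_mono) auto
      then show ?thesis using pred_loc[OF xb] by linarith
    qed
    have al: "\<alpha> k \<ge> min e' (norm (ssel k))" using \<alpha>_lower e'(2) k(4) by blast
    from dec_cases[of k] show ?thesis
    proof (elim disjE conjE)
      assume a: "\<eta>1 \<le> \<rho>1 k" "xt k = x k + s k" "dec k = \<rho>1 k * pred k"
      have "cS \<le> \<eta>1 * PL" by (simp add: cS_def)
      also have "\<dots> \<le> \<eta>1 * pred k" using PLk params by (intro mult_left_mono) auto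
      also have "\<dots> \<le> \<rho>1 k * pred k" using a(1) pred_pos[of k] by (intro mult_right_mono) auto
      finally show ?thesis using a(3) by simp
    next
      assume a: "\<rho>1 k < \<eta>1" "\<eta> \<le> \<rho>2 k" "xt k = x k + \<alpha> k *\<^sub>R sbar k" "dec k = \<rho>2 k * den2 k"
      have d2: "den2 k \<ge> min (min e' (min Dl (e0 / KB)) * e0 / 2) (min (e' / Dm) 1 / 2 * PL)"
      proof (cases "cnd k")
        case True
        have ss: "ssel k = sC k" using cnd_true[OF True] by simp
        have "norm (sC k) \<ge> min Dl (e0 / KB)"
        proof -
          have "e0 / KB \<le> norm (g (x k)) / KB" using r0e0(3)[OF xb] KB_pos by (intro divide_right_mono) auto
          then have "min (\<Delta> k) (norm (g (x k)) / KB) \<ge> min Dl (e0 / KB)"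
            using Dk by linarith
          then show ?thesis using sC_lower[of k] by linarith
        qed
        then have "\<alpha> k \<ge> min e' (min Dl (e0 / KB))" using al ss by simp
        then have "\<alpha> k * norm (g (x k)) / 2 \<ge> min e' (min Dl (e0 / KB)) * e0 / 2"
          using r0e0(3)[OF xb] e' Dl r0e0(2) KB_pos \<alpha>_pos[of k]
          by (intro divide_right_mono mult_mono) auto
        then show ?thesis using den2_cauchy[OF True] by linarith
      next
        case False
        have ss: "ssel k = s k" using cnd_false[OF False] by simp
        have ns: "norm (s k) > 0" "norm (s k) \<le> Dm" using s_nz[of k] s_tr[rule_format, of k] \<Delta>_le[of k] by auto
        have "\<alpha> k / norm (s k) \<ge> min (e' / Dm) 1"
        proof -
          have "\<alpha> k \<ge> min e' (norm (s k))" using al ss by simp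
          then have "\<alpha> k / norm (s k) \<ge> min e' (norm (s k)) / norm (s k)" using ns by (simp add: divide_right_mono)
          moreover have "min e' (norm (s k)) / norm (s k) \<ge> min (e' / Dm) 1"
          proof (cases "e' \<le> norm (s k)")
            case True
            then have m1: "min e' (norm (s k)) = e'" by simp
            have "e' / norm (s k) \<ge> e' / Dm" using ns e' Dm_pos by (intro divide_left_mono) auto
            then show ?thesis unfolding m1 by linarith
          next
            case False
            then show ?thesis using ns by simp
          qed
          ultimately show ?thesis by linarith
        qed
        then have "min (e' / Dm) 1 / 2 \<le> (\<alpha> k / norm (s k)) / 2" by (rule divide_right_mono) simp
        moreover have "(\<alpha> k / norm (s k)) / 2 = \<alpha> k / (2 * norm (s k))" by (simp add: divide_divide_eq_left mult.commute)
        ultimately have h1: "min (e' / Dm) 1 / 2 \<le> \<alpha> k / (2 * norm (s k))" by simp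
        have h2: "0 \<le> \<alpha> k / (2 * norm (s k))" using \<alpha>_pos[of k] ns by simp
        have "\<alpha> k / (2 * norm (s k)) * pred k \<ge> min (e' / Dm) 1 / 2 * PL"
          using mult_mono[OF h1 PLk h2] PL by simp
        then show ?thesis using den2_s[OF False] by linarith
      qed
      have "cS \<le> \<eta> * min (min e' (min Dl (e0 / KB)) * e0 / 2) (min (e' / Dm) 1 / 2 * PL)" by (simp add: cS_def)
      also have "\<dots> \<le> \<eta> * den2 k" using d2 params by (intro mult_left_mono) auto
      also have "\<dots> \<le> \<rho>2 k * den2 k" using a(2) den2_pos[of k] by (intro mult_right_mono) auto
      finally show ?thesis using a(4) by simp
    next
      assume "\<rho>1 k < \<eta>1" "\<rho>2 k < \<eta>" "xt k = x k" "dec k = 0"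
      then show ?thesis using k(3) by (simp add: succ_def)
    qed
  qed
  have "\<forall>\<^sub>F k in sequentially. dec k < cS" using order_tendstoD(2)[OF dec_lim cS] .
  then obtain K2 where K2: "\<forall>k\<ge>K2. dec k < cS" by (auto simp: eventually_sequentially)
  obtain k where k: "k \<ge> max K2 (max K1 Kb)" "succ k" "Gamma_min psi (x k) \<ge> ereal (eps N)" using N by blast
  have "dec k \<ge> cS" using big k by simp
  moreover have "dec k < cS" using K2 k by simp
  ultimately show False by simp
qed

end

theorem theorem4p11:
  fixes f phi psi :: "real^'n \<Rightarrow> real" and gradf :: "real^'n \<Rightarrow> real^'n"
    and u :: "real^'n \<Rightarrow> real" and d g :: "real^'n \<Rightarrow> real^'n"
    and Gs :: "real^'n \<Rightarrow> real^'n \<Rightarrow> ereal"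
    and S :: "nat \<Rightarrow> (real^'n) set" and m :: nat and \<delta> :: ereal and \<kappa> :: real
    and T :: "real^'n \<Rightarrow> real \<Rightarrow> real^'n"
    and \<eta> \<eta>1 \<eta>2 r1 r2 \<Delta>max \<gamma>1 \<gamma>2 :: real and eps :: "nat \<Rightarrow> real" and ell :: "real \<Rightarrow> real"
    and x xt s sC ssel sbar :: "nat \<Rightarrow> real^'n" and B :: "nat \<Rightarrow> real^'n^'n"
    and \<Delta> \<alpha>C \<rho>1 \<rho>2 \<alpha> :: "nat \<Rightarrow> real" and c :: "nat \<Rightarrow> nat \<Rightarrow> nat"
  assumes
    f_deriv: "\<forall>y. (f has_derivative (\<lambda>h. gradf y \<bullet> h)) (at y)"
    and gradf_cont: "continuous_on UNIV gradf"
    and phi_convex: "convex_on UNIV phi"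
    and psi_def: "psi = (\<lambda>y. f y + phi y)"
    and g_def: "g = (\<lambda>y. u y *\<^sub>R d y)"
    and pg_nonstat: "\<forall>y. \<not> stationary gradf phi y \<longrightarrow>
         norm (d y) = 1 \<and> dir_deriv psi y (d y) < 0 \<and> dir_deriv psi y (d y) \<le> u y \<and> u y < 0"
    and pg_stat: "\<forall>y. stationary gradf phi y \<longrightarrow> d y = 0 \<and> u y = 0"
    and Gs_pos: "\<forall>y v. norm v = 1 \<longrightarrow> Gs y v > 0"
    and S0: "S 0 = UNIV"
    and S_nested: "\<forall>i<m. S (Suc i) \<subseteq> S i"
    and \<delta>_pos: "\<delta> > 0"
    and \<kappa>_pos: "\<kappa> > 0"
    and trunc_i: "\<forall>y\<in>S m. Gamma_min psi y \<ge> \<delta>"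
    and trunc_ii: "\<forall>a i y. 0 < a \<and> ereal a \<le> \<delta> \<and> i < m \<and> y \<in> S i - S (Suc i) \<longrightarrow>
         (Gamma_min psi y \<ge> ereal a \<longrightarrow> T y a = y) \<and>
         (Gamma_min psi y < ereal a \<longrightarrow> T y a \<in> S (Suc i) \<and> Gamma_min psi (T y a) \<ge> ereal a
                                     \<and> norm (T y a - y) \<le> \<kappa> * a)"
    and params: "0 < \<eta> \<and> \<eta> < \<eta>1 \<and> \<eta>1 < \<eta>2 \<and> \<eta>2 < 1 \<and> 0 < r1 \<and> r1 < 1 \<and> 1 < r2
                 \<and> \<Delta>max > 0 \<and> \<gamma>1 > 0 \<and> \<gamma>2 > 0"
    and eps_pos: "\<forall>j. eps j > 0"
    and eps_decr: "\<forall>j. eps (Suc j) < eps j"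
    and eps_summable: "summable eps"
    and eps_le: "\<forall>j. ereal (eps j) \<le> \<delta>"
    and ell_range: "\<forall>t>0. 0 \<le> ell t \<and> ell t \<le> 1/2"
    and ell_mono: "\<forall>a b. 0 < a \<and> a \<le> b \<longrightarrow> ell b \<le> ell a"
    and ell_lim: "(ell \<longlongrightarrow> 0) (at_right 0)"
    and \<Delta>0: "\<Delta> 0 > 0"
    and c0: "c 0 = (\<lambda>_. 0)"
    and nonterm: "\<forall>k. g (x k) \<noteq> 0"
    and cauchy: "\<forall>k. 0 \<le> \<alpha>C k \<and> \<alpha>C k \<le> \<Delta> k / norm (g (x k)) \<and>
         (\<forall>t. 0 \<le> t \<and> t \<le> \<Delta> k / norm (g (x k)) \<longrightarrow>
            tr_model (psi (x k)) (g (x k)) (B k) (- (\<alpha>C k *\<^sub>R g (x k)))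
              \<le> tr_model (psi (x k)) (g (x k)) (B k) (- (t *\<^sub>R g (x k))))"
    and sC_def: "\<forall>k. sC k = - (\<alpha>C k *\<^sub>R g (x k))"
    and s_tr: "\<forall>k. norm (s k) \<le> \<Delta> k"
    and s_dec1: "\<forall>k. tr_model (psi (x k)) (g (x k)) (B k) 0 - tr_model (psi (x k)) (g (x k)) (B k) (s k)
         \<ge> \<gamma>1 / 2 * norm (g (x k)) * min (\<Delta> k) (\<gamma>2 * norm (g (x k)))"
    and s_dec2: "\<forall>k. tr_model (psi (x k)) (g (x k)) (B k) 0 - tr_model (psi (x k)) (g (x k)) (B k) (s k)
         \<ge> (1 - ell (norm (s k))) * (tr_model (psi (x k)) (g (x k)) (B k) 0
                                     - tr_model (psi (x k)) (g (x k)) (B k) (sC k))"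
    and \<rho>1_def: "\<forall>k. \<rho>1 k = (psi (x k) - psi (x k + s k)) /
         (tr_model (psi (x k)) (g (x k)) (B k) 0 - tr_model (psi (x k)) (g (x k)) (B k) (s k))"
    and ssel_def: "\<forall>k. ssel k =
         (if tr_model (psi (x k)) (g (x k)) (B k) 0
             - tr_model (psi (x k)) (g (x k)) (B k) (safe_step Gs (x k) (s k) *\<^sub>R sgn (s k))
           < safe_step Gs (x k) (s k) / (2 * norm (s k)) *
             (tr_model (psi (x k)) (g (x k)) (B k) 0 - tr_model (psi (x k)) (g (x k)) (B k) (s k))
          then sC k else s k)"
    and sbar_def: "\<forall>k. sbar k = sgn (ssel k)"
    and \<alpha>_def: "\<forall>k. \<alpha> k = safe_step Gs (x k) (ssel k)"
    and \<rho>2_def: "\<forall>k. \<rho>2 k = (psi (x k) - psi (x k + \<alpha> k *\<^sub>R sbar k)) /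
         (tr_model (psi (x k)) (g (x k)) (B k) 0
            - tr_model (psi (x k)) (g (x k)) (B k) (\<alpha> k *\<^sub>R sbar k))"
    and update: "\<forall>k. (\<rho>1 k \<ge> \<eta>1 \<longrightarrow> xt k = x k + s k \<and>
            \<Delta> (Suc k) = (if \<rho>1 k > \<eta>2 then min \<Delta>max (r2 * \<Delta> k) else \<Delta> k)) \<and>
         (\<rho>1 k < \<eta>1 \<longrightarrow>
            \<Delta> (Suc k) = (if \<rho>2 k < \<eta>1 then r1 * \<Delta> k
                          else if \<rho>2 k > \<eta>2 then min \<Delta>max (r2 * \<Delta> k) else \<Delta> k) \<and>
            xt k = (if \<rho>2 k \<ge> \<eta> then x k + \<alpha> k *\<^sub>R sbar k else x k))"
    and trunc_step: "\<forall>k. trunc_loop (Gamma_min psi) S m T eps (c k) (xt k) (c (Suc k)) (x (Suc k))"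
    and A1: "bdd_below (range psi)"
    and A2: "\<forall>y. g y \<noteq> 0 \<longrightarrow> (\<exists>r>0. \<exists>e>0. \<forall>z\<in>ball y r. norm (g z) \<ge> e)"
    and B1: "\<exists>R>0. \<forall>k. x k \<in> ball 0 R"
    and B2: "\<exists>\<kappa>B>0. \<forall>k. norm (B k) \<le> \<kappa>B"
    and B3: "\<forall>kl. strict_mono kl \<and> convergent (\<lambda>l. x (kl l)) \<and> (\<lambda>l. \<alpha> (kl l)) \<longlonglongrightarrow> 0 \<longrightarrow>
         (\<lambda>l. psi (x (kl l) + \<alpha> (kl l) *\<^sub>R sbar (kl l)) - psi (x (kl l))
               - \<alpha> (kl l) * dir_deriv psi (x (kl l)) (sbar (kl l)))
           \<in> o[sequentially](\<lambda>l. \<alpha> (kl l))"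
    and B4: "\<forall>e>0. \<exists>e'>0. \<forall>k. Gamma_min psi (x k) \<ge> ereal e \<longrightarrow> Gs (x k) (sbar k) \<ge> ereal e'"
  shows "\<forall>L. sym_posdef L \<longrightarrow> (\<lambda>k. norm (Fnat L gradf phi (x k))) \<longlonglongrightarrow> 0"
proof -
  have AX: "alg f phi psi gradf u d g Gs S m \<delta> \<kappa> T \<eta> \<eta>1 \<eta>2 r1 r2 \<Delta>max \<gamma>1 \<gamma>2 eps ell x xt s sC ssel sbar B \<Delta> \<alpha>C \<rho>1 \<rho>2 \<alpha> c"
    by (rule alg.intro[OF f_deriv gradf_cont phi_convex psi_def g_def pg_nonstat pg_stat Gs_pos S0 S_nested \<delta>_pos \<kappa>_pos trunc_i trunc_ii params eps_pos eps_decr eps_summable eps_le ell_range ell_mono ell_lim \<Delta>0 c0 nonterm cauchy sC_def s_tr s_dec1 s_dec2 \<rho>1_def ssel_def sbar_def \<alpha>_def \<rho>2_def update trunc_step A1 A2 B1 B2 B3 B4])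
  show ?thesis
  proof (intro allI impI)
    fix L :: "real^'n^'n" assume L: "sym_posdef L"
    show "(\<lambda>k. norm (Fnat L gradf phi (x k))) \<longlonglongrightarrow> 0"
    proof (rule ccontr)
      assume nc: "\<not> (\<lambda>k. norm (Fnat L gradf phi (x k))) \<longlonglongrightarrow> 0"
      obtain \<epsilon> where \<epsilon>: "\<epsilon> > 0" "\<forall>K. \<exists>k\<ge>K. norm (Fnat L gradf phi (x k)) \<ge> \<epsilon>"
      proof -
        have "\<not> (\<forall>r>0. \<exists>no. \<forall>n\<ge>no. norm (norm (Fnat L gradf phi (x n)) - 0) < r)"
          using nc LIMSEQ_iff by blast
        then obtain r where "r > 0" "\<forall>no. \<exists>n\<ge>no. norm (Fnat L gradf phi (x n)) \<ge> r"
          by (auto simp: not_less)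
        then show ?thesis using that by blast
      qed
      define Sx where "Sx = {k. norm (Fnat L gradf phi (x k)) \<ge> \<epsilon>}"
      have "infinite Sx" unfolding infinite_nat_iff_unbounded_le Sx_def using \<epsilon>(2) by auto
      from infinite_enumerate[OF this] obtain r :: "nat \<Rightarrow> nat" where r: "strict_mono r" "\<forall>n. r n \<in> Sx" by blast
      from B1 obtain R where R: "R > 0" "\<forall>k. x k \<in> ball 0 R" by (elim exE conjE)
      have "seq_compact (cball (0::real^'n) R)" by (rule compact_imp_seq_compact) simp
      moreover have "\<forall>n. (x \<circ> r) n \<in> cball 0 R" using R(2) by (auto intro: less_imp_le)
      ultimately obtain l rr where lr: "l \<in> cball 0 R" "strict_mono rr" "((x \<circ> r) \<circ> rr) \<longlonglongrightarrow> l"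
        by (rule seq_compactE)
      define kl0 where "kl0 = r \<circ> rr"
      have kl0: "strict_mono kl0" using strict_mono_o[OF r(1) lr(2)] by (simp add: kl0_def)
      have klim: "(\<lambda>n. x (kl0 n)) \<longlonglongrightarrow> l" using lr(3) by (simp add: kl0_def o_def)
      have big: "norm (Fnat L gradf phi (x (kl0 n))) \<ge> \<epsilon>" for n
        using r(2) by (simp add: kl0_def Sx_def)
      show False
      proof (cases "stationary gradf phi l")
        case True
        have "isCont (Fnat L gradf phi) l"
          using Fnat_continuous[OF L phi_convex gradf_cont] by (simp add: continuous_on_eq_continuous_at)
        from isCont_tendsto_compose[OF this klim]
        have "(\<lambda>n. Fnat L gradf phi (x (kl0 n))) \<longlonglongrightarrow> 0"
          using Fnat_stationary[OF L phi_convex True] by simp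
        then have "(\<lambda>n. norm (Fnat L gradf phi (x (kl0 n)))) \<longlonglongrightarrow> 0"
          using tendsto_norm_zero by blast
        then have "\<forall>\<^sub>F n in sequentially. norm (Fnat L gradf phi (x (kl0 n))) < \<epsilon>"
          using \<epsilon>(1) by (simp add: order_tendstoD(2))
        then obtain n where "norm (Fnat L gradf phi (x (kl0 n))) < \<epsilon>" by (auto simp: eventually_sequentially)
        then show False using big[of n] by simp
      next
        case False
        then have "g l \<noteq> 0" using pg_nonstat g_def by auto
        then have "alg_loc f phi psi gradf u d g Gs S m \<delta> \<kappa> T \<eta> \<eta>1 \<eta>2 r1 r2 \<Delta>max \<gamma>1 \<gamma>2 eps ell x xt s sC ssel sbar B \<Delta> \<alpha>C \<rho>1 \<rho>2 \<alpha> c l kl0"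
          by (intro alg_loc.intro AX alg_loc_axioms.intro kl0 klim)
        then show False by (rule alg_loc.contradiction)
      qed
    qed
  qed
qed


end
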